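(* Let $p$ be an odd prime, $\omega=e^{2\pi i/p}$, $m\ge1$, $Q=T_{(p^m)}$ and $K=K_Q(p)$, and let $\phi=\phi_1$ be the map on $K$ defined below. Let $M=S_\xi X^b$ and $M'=S_{\xi'}X^{b'}$ be elements of $K$ with $b,b'\neq0$ and $[M,M']=\omega^c\mathbbm{1}$ for some $c\in\mathbb{Z}_p$. Then $\phi(MM')=\phi(M)\phi(M')$.
   Context: Let $\{|q\rangle:q\in\mathbb{Z}_p\}$ be the computational basis of $\mathbb{C}^p$, $X|q\rangle=|q+1\rangle$. For $\xi:\mathbb{Z}_p\to U(1)$ let $S_\xi=\mathrm{diag}(\xi(0),\dots,\xi(p-1))$. $T=\{S_\xi:\prod_{q}\xi(q)=1\}$, $T_{(p^k)}=\{S\in T:S^{p^k}=\mathbbm{1}\}$. $K_Q(p)$ is the subgroup of $SU(p)$ generated by all $S_\xi X^b$, $S_\xi\in Q$, $b\in\mathbb{Z}_p$; each element is uniquely $S_\xi X^b$. The commutator is $[A,B]=ABA^{-1}B^{-1}$. Every $S_\xi\in T_{(p^m)}$ has a unique expansion $\xi(q)=\exp\big(\sum_{j=1}^m\frac{2\pi i}{p^j}\sum_{a=0}^{p-1}\vartheta_{j,a}q^a\big)$ with $\vartheta_{j,a}\in\{0,\dots,p-1\}$ (set $\vartheta_{2,0}=0$ if $m=1$). Define $R(\xi)(q)=\omega^{\vartheta_{1,0}+\vartheta_{1,1}q}e^{2\pi i\vartheta_{2,0}/p^2}$ and $P(\xi)(q)=\omega^{\vartheta_{1,0}+\vartheta_{1,1}q}$.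 Define $\phi_1:K\to U(p)$ by $\phi_1(S_\xi)=S_{R(\xi)}$, $\phi_1(S_\xi X)=S_{P(\xi)}X$, and for $2\le b\le p-1$, $\phi_1(M)=\phi_1(M^{y})^{b}$ where $M=S_\xi X^b$ and $y\in\{1,\dots,p-1\}$ with $yb\equiv1\bmod p$. *)

theory Defs
  imports "Jordan_Normal_Form.Matrix" "HOL-Number_Theory.Cong"
begin

text \<open>Matrices in U(p) are p x p complex matrices, rows/columns indexed by 0..p-1 (= Z_p).\<close>

definition omega :: "nat \<Rightarrow> complex" where
  "omega p = exp (2 * of_real pi * \<i> / of_nat p)"

text \<open>Shift X with X|q> = |q+1 mod p>: entry (row i, column j) is 1 iff i = j+1 mod p.\<close>
definition Xmat :: "nat \<Rightarrow> complex mat" where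
  "Xmat p = mat p p (\<lambda>(i,j). if i = (j + 1) mod p then 1 else 0)"

definition Smat :: "nat \<Rightarrow> (nat \<Rightarrow> complex) \<Rightarrow> complex mat" where
  "Smat p \<xi> = mat_diag p \<xi>"

text \<open>Functions xi : Z_p -> U(1) with S_xi in T_(p^m) (xi normalised to 1 outside {0..<p}).\<close>
definition Qset :: "nat \<Rightarrow> nat \<Rightarrow> (nat \<Rightarrow> complex) set" where
  "Qset p m = {\<xi>. (\<forall>q<p. norm (\<xi> q) = 1) \<and> (\<Prod>q<p. \<xi> q) = 1
                 \<and> Smat p \<xi> ^\<^sub>m (p ^ m) = 1\<^sub>m p \<and> (\<forall>q\<ge>p. \<xi> q = 1)}"

definition Kset :: "nat \<Rightarrow> nat \<Rightarrow> complex mat set" where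
  "Kset p m = {Smat p \<xi> * (Xmat p ^\<^sub>m b) | \<xi> b. \<xi> \<in> Qset p m \<and> b < p}"

definition dec_xi :: "nat \<Rightarrow> nat \<Rightarrow> complex mat \<Rightarrow> (nat \<Rightarrow> complex)" where
  "dec_xi p m M = (THE \<xi>. \<xi> \<in> Qset p m \<and> (\<exists>b<p. M = Smat p \<xi> * (Xmat p ^\<^sub>m b)))"

definition dec_b :: "nat \<Rightarrow> nat \<Rightarrow> complex mat \<Rightarrow> nat" where
  "dec_b p m M = (THE b. b < p \<and> (\<exists>\<xi>\<in>Qset p m. M = Smat p \<xi> * (Xmat p ^\<^sub>m b)))"

text \<open>The coefficients vartheta_{j,a} (j in 1..m, a in 0..p-1) of the unique expansion;
  set to 0 outside this range (so vartheta_{2,0} = 0 when m = 1).\<close>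
definition theta :: "nat \<Rightarrow> nat \<Rightarrow> (nat \<Rightarrow> complex) \<Rightarrow> nat \<Rightarrow> nat \<Rightarrow> nat" where
  "theta p m \<xi> = (THE \<theta>. (\<forall>j a. \<theta> j a < p) \<and>
      (\<forall>j a. (j < 1 \<or> j > m \<or> a \<ge> p) \<longrightarrow> \<theta> j a = 0) \<and>
      (\<forall>q<p. \<xi> q = exp (\<Sum>j\<in>{1..m}. 2 * of_real pi * \<i> / of_nat (p ^ j)
                                    * of_nat (\<Sum>a<p. \<theta> j a * q ^ a))))"

definition Rfun :: "nat \<Rightarrow> nat \<Rightarrow> (nat \<Rightarrow> complex) \<Rightarrow> nat \<Rightarrow> complex" where
  "Rfun p m \<xi> q = (if q < p then
      omega p ^ (theta p m \<xi> 1 0 + theta p m \<xi> 1 1 * q)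
        * exp (2 * of_real pi * \<i> * of_nat (theta p m \<xi> 2 0) / of_nat (p ^ 2))
     else 1)"

definition Pfun :: "nat \<Rightarrow> nat \<Rightarrow> (nat \<Rightarrow> complex) \<Rightarrow> nat \<Rightarrow> complex" where
  "Pfun p m \<xi> q = (if q < p then omega p ^ (theta p m \<xi> 1 0 + theta p m \<xi> 1 1 * q) else 1)"

text \<open>phi_1 on S_xi X^b for b in {0,1}.\<close>
definition phi_base :: "nat \<Rightarrow> nat \<Rightarrow> complex mat \<Rightarrow> complex mat" where
  "phi_base p m M = (if dec_b p m M = 0 then Smat p (Rfun p m (dec_xi p m M))
                     else Smat p (Pfun p m (dec_xi p m M)) * Xmat p)"

definition phi1 :: "nat \<Rightarrow> nat \<Rightarrow> complex mat \<Rightarrow> complex mat" where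
  "phi1 p m M = (let b = dec_b p m M in
     if b \<le> 1 then phi_base p m M
     else (let y = (THE y. y \<in> {1..p-1} \<and> [y * b = 1] (mod p))
           in phi_base p m (M ^\<^sub>m y) ^\<^sub>m b))"

definition minv :: "complex mat \<Rightarrow> complex mat" where
  "minv A = (THE B. inverts_mat A B \<and> inverts_mat B A)"

definition commutator :: "complex mat \<Rightarrow> complex mat \<Rightarrow> complex mat" where
  "commutator A B = A * B * minv A * minv B"

end

theory Submission
  imports Defs "HOL-Number_Theory.Number_Theory" "HOL-Computational_Algebra.Polynomial"
begin

definition monm :: "nat \<Rightarrow> (nat \<Rightarrow> complex) \<Rightarrow> int \<Rightarrow> complex mat" where
  "monm p f b = mat p p (\<lambda>(i,j). if int i = (int j + b) mod int p then f i else 0)"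

definition sh :: "nat \<Rightarrow> int \<Rightarrow> nat \<Rightarrow> nat" where
  "sh p b i = nat ((int i - b) mod int p)"

lemma mono_carrier[simp]: "monm p f b \<in> carrier_mat p p"
  by (simp add: monm_def)

lemma mono_dim[simp]: "dim_row (monm p f b) = p" "dim_col (monm p f b) = p"
  by (simp_all add: monm_def)

lemma sh_lt: "p > 0 \<Longrightarrow> sh p b i < p"
  unfolding sh_def by (simp add: nat_less_iff)

lemma sh_iff:
  assumes "p > 0" "k < p"
  shows "(int i = (int k + b) mod int p \<and> i < p) \<longleftrightarrow> (k = sh p b i \<and> i < p)"
proof
  assume h: "int i = (int k + b) mod int p \<and> i < p"
  then have "(int i - b) mod int p = ((int k + b) mod int p - b) mod int p" by simp
  also have "\<dots> = int k mod int p" by (simp add: mod_diff_left_eq)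
  also have "\<dots> = int k" using assms by simp
  finally show "k = sh p b i \<and> i < p" using h by (simp add: sh_def)
next
  assume h: "k = sh p b i \<and> i < p"
  then have "int k = (int i - b) mod int p" using assms by (simp add: sh_def)
  then have "(int k + b) mod int p = ((int i - b) mod int p + b) mod int p" by simp
  also have "\<dots> = int i mod int p" by (simp add: mod_add_left_eq)
  finally show "int i = (int k + b) mod int p \<and> i < p" using h by simp
qed

lemma mono_mult:
  assumes p: "p > 0"
  shows "monm p f b * monm p g c = monm p (\<lambda>i. f i * g (sh p b i)) (b + c)"
proof (rule eq_matI)
  fix i j assume i: "i < dim_row (monm p (\<lambda>i. f i * g (sh p b i)) (b + c))"
    and j: "j < dim_col (monm p (\<lambda>i. f i * g (sh p b i)) (b + c))"
  then have i: "i < p" and j: "j < p" by simp_all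
  have "(monm p f b * monm p g c) $$ (i, j) =
     (\<Sum>k<p. (if int i = (int k + b) mod int p then f i else 0) *
              (if int k = (int j + c) mod int p then g k else 0))"
    using i j by (simp add: monm_def scalar_prod_def lessThan_atLeast0 row_def col_def)
  also have "\<dots> = (\<Sum>k<p. if k = sh p b i then f i * (if int k = (int j + c) mod int p then g k else 0) else 0)"
    by (rule sum.cong, simp) (use sh_iff[OF p _, of _ i b] i in auto)
  also have "\<dots> = f i * (if int (sh p b i) = (int j + c) mod int p then g (sh p b i) else 0)"
    using sh_lt[OF p] by simp
  also have "\<dots> = monm p (\<lambda>i. f i * g (sh p b i)) (b + c) $$ (i, j)"
  proof -
    have "int (sh p b i) = (int j + c) mod int p \<longleftrightarrow> int i = (int j + (b + c)) mod int p"
    proof -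
      have e: "int (sh p b i) = (int i - b) mod int p" using p by (simp add: sh_def)
      have ii: "int i mod int p = int i" using i by simp
      show ?thesis unfolding e
      proof
        assume h: "(int i - b) mod int p = (int j + c) mod int p"
        have "int i = ((int i - b) + b) mod int p" using ii by simp
        also have "\<dots> = ((int i - b) mod int p + b) mod int p" by (simp add: mod_add_left_eq)
        also have "\<dots> = ((int j + c) mod int p + b) mod int p" using h by simp
        also have "\<dots> = (int j + (b + c)) mod int p" by (metis mod_add_left_eq add.commute add.left_commute)
        finally show "int i = (int j + (b + c)) mod int p" .
      next
        assume h: "int i = (int j + (b + c)) mod int p"
        have "(int i - b) mod int p = ((int j + (b + c)) mod int p - b) mod int p" using h by simp
        also have "\<dots> = (int j + c) mod int p" by (simp add: mod_diff_left_eq algebra_simps)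
        finally show "(int i - b) mod int p = (int j + c) mod int p" .
      qed
    qed
    then show ?thesis using i j by (auto simp: monm_def)
  qed
  finally show "(monm p f b * monm p g c) $$ (i, j) = monm p (\<lambda>i. f i * g (sh p b i)) (b + c) $$ (i, j)" .
qed auto

lemma mono_cong:
  assumes "\<And>i. i < p \<Longrightarrow> f i = g i" "b mod int p = c mod int p"
  shows "monm p f b = monm p g c"
proof -
  have "\<And>j. (int j + b) mod int p = (int j + c) mod int p"
    using assms(2) by (metis mod_add_right_eq)
  then show ?thesis unfolding monm_def using assms(1)
    by (intro eq_matI) auto
qed

lemma mono_entry: "i < p \<Longrightarrow> j < p \<Longrightarrow> monm p f b $$ (i,j) = (if int i = (int j + b) mod int p then f i else 0)"
  by (simp add: monm_def)

lemma sh_prop: "p > 0 \<Longrightarrow> int i = (int (sh p b i) + b) mod int p \<or> i \<ge> p"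
  using sh_iff[of p "sh p b i" i b] sh_lt[of p b i] by auto

lemma mono_eq_D:
  assumes p: "p > 0" and nz: "\<And>i. i < p \<Longrightarrow> f i \<noteq> 0" and eq: "monm p f b = monm p g c"
  shows "b mod int p = c mod int p \<and> (\<forall>i<p. g i = f i)"
proof -
  have A: "int i = (int (sh p b i) + c) mod int p \<and> g i = f i" if i: "i < p" for i
  proof -
    have j: "sh p b i < p" using sh_lt[OF p] .
    have "monm p f b $$ (i, sh p b i) = f i" using sh_prop[OF p, of i b] i j by (simp add: mono_entry)
    moreover have "monm p g c $$ (i, sh p b i) = (if int i = (int (sh p b i) + c) mod int p then g i else 0)"
      using i j by (simp add: mono_entry)
    ultimately show ?thesis using eq nz[OF i] by (auto split: if_splits)
  qed
  have "int 0 = (int (sh p b 0) + b) mod int p" using sh_prop[OF p, of 0 b] p by simp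
  moreover have "int 0 = (int (sh p b 0) + c) mod int p" using A[of 0] p by simp
  ultimately have "(int (sh p b 0) + b) mod int p = (int (sh p b 0) + c) mod int p" by simp
  then have "((int (sh p b 0) + b) mod int p - int (sh p b 0)) mod int p = ((int (sh p b 0) + c) mod int p - int (sh p b 0)) mod int p" by simp
  then have "b mod int p = c mod int p" by (simp add: mod_diff_left_eq)
  then show ?thesis using A by auto
qed

lemma Smat_mono: "Smat p \<xi> = monm p \<xi> 0"
  unfolding Smat_def mat_diag_def monm_def by (intro eq_matI) auto

lemma Xmat_mono: "Xmat p = monm p (\<lambda>_. 1) 1"
proof -
  have "\<And>i j. (i = (j + 1) mod p) \<longleftrightarrow> (int i = (int j + 1) mod int p)"
    by (metis of_nat_1 of_nat_add of_nat_eq_iff zmod_int)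
  then show ?thesis unfolding Xmat_def monm_def by (intro eq_matI) auto
qed

lemma one_mono: "1\<^sub>m p = monm p (\<lambda>_. 1) 0"
  unfolding monm_def by (intro eq_matI) auto

lemma smult_one_mono: "a \<cdot>\<^sub>m 1\<^sub>m p = monm p (\<lambda>_. a) 0"
  unfolding monm_def by (intro eq_matI) auto

lemma mono_pow:
  assumes p: "p > 0"
  shows "monm p f b ^\<^sub>m n = monm p (\<lambda>i. \<Prod>s<n. f (sh p (int s * b) i)) (int n * b)"
proof (induction n)
  case 0
  then show ?case by (simp add: one_mono)
next
  case (Suc n)
  have "monm p f b ^\<^sub>m Suc n = monm p (\<lambda>i. \<Prod>s<n. f (sh p (int s * b) i)) (int n * b) * monm p f b"
    using Suc by simp
  also have "\<dots> = monm p (\<lambda>i. (\<Prod>s<n. f (sh p (int s * b) i)) * f (sh p (int n * b) i)) (int n * b + b)"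
    by (rule mono_mult[OF p])
  also have "\<dots> = monm p (\<lambda>i. \<Prod>s<Suc n. f (sh p (int s * b) i)) (int (Suc n) * b)"
    by (simp add: algebra_simps)
  finally show ?case .
qed

lemma int_sh: "p > 0 \<Longrightarrow> int (sh p b i) = (int i - b) mod int p"
  by (simp add: sh_def)

lemma sh_0: "i < p \<Longrightarrow> sh p 0 i = i"
  by (simp add: sh_def)

lemma small_dvd:
  assumes "int p dvd int s - int t" "s < p" "t < p" shows "s = t"
proof (rule ccontr)
  assume "s \<noteq> t"
  then have "int s - int t \<noteq> 0" by simp
  then have "\<bar>int p\<bar> \<le> \<bar>int s - int t\<bar>" using assms(1) dvd_imp_le_int by blast
  then show False using assms(2,3) by linarith
qed

lemma sh_inj:
  assumes p: "p > 0" and i: "i < p" and j: "j < p" and e: "sh p b i = sh p b j"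
  shows "i = j"
proof -
  have "(int i - b) mod int p = (int j - b) mod int p"
    using arg_cong[OF e, of int] p by (simp add: int_sh)
  then have "int p dvd (int i - b) - (int j - b)" by (simp only: mod_eq_dvd_iff)
  then have "int p dvd int i - int j" by simp
  then show ?thesis using i j small_dvd by blast
qed

lemma sh_bij: "p > 0 \<Longrightarrow> bij_betw (sh p b) {..<p} {..<p}"
  by (intro bij_betw_imageI endo_inj_surj) (auto simp: inj_on_def sh_lt intro: sh_inj)

lemma prod_sh: "p > 0 \<Longrightarrow> (\<Prod>i<p. g (sh p b i)) = (\<Prod>i<p. g i)"
  using prod.reindex_bij_betw[OF sh_bij] by blast

lemma sh_mult_inj:
  assumes p: "prime p" and b: "\<not> int p dvd b" and s: "s < p" and t: "t < p"
    and e: "sh p (int s * b) i = sh p (int t * b) i"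
  shows "s = t"
proof -
  have p0: "p > 0" using p prime_gt_0_nat by blast
  have "(int i - int s * b) mod int p = (int i - int t * b) mod int p"
    using arg_cong[OF e, of int] p0 by (simp add: int_sh)
  then have "int p dvd (int i - int t * b) - (int i - int s * b)"
    by (metis mod_eq_dvd_iff)
  then have "int p dvd (int s - int t) * b" by (simp add: algebra_simps)
  then have "int p dvd (int s - int t)"
    using b p by (metis prime_dvd_mult_iff prime_nat_int_transfer)
  then show ?thesis using s t small_dvd by blast
qed

lemma prod_sh_mult:
  assumes p: "prime p" and b: "\<not> int p dvd b"
  shows "(\<Prod>s<p. f (sh p (int s * b) i)) = (\<Prod>q<p. f q)"
proof -
  have p0: "p > 0" using p prime_gt_0_nat by blast
  have "bij_betw (\<lambda>s. sh p (int s * b) i) {..<p} {..<p}"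
    by (intro bij_betw_imageI endo_inj_surj)
       (auto simp: inj_on_def sh_lt[OF p0] intro: sh_mult_inj[OF p b])
  then show ?thesis using prod.reindex_bij_betw by blast
qed

lemma mono_pow_p:
  assumes p: "prime p" and b: "\<not> int p dvd b" and f: "(\<Prod>q<p. f q) = 1"
  shows "monm p f b ^\<^sub>m p = 1\<^sub>m p"
proof -
  have p0: "p > 0" using p prime_gt_0_nat by blast
  have "monm p f b ^\<^sub>m p = monm p (\<lambda>i. \<Prod>s<p. f (sh p (int s * b) i)) (int p * b)"
    by (rule mono_pow[OF p0])
  also have "\<dots> = monm p (\<lambda>_. 1) 0"
    by (rule mono_cong) (auto simp: prod_sh_mult[OF p b] f)
  finally show ?thesis by (simp add: one_mono)
qed

definition ee :: "nat \<Rightarrow> nat \<Rightarrow> complex" where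
  "ee N j = exp (2 * of_real pi * \<i> * of_nat j / of_nat N)"

lemma ee_add: "ee N (a + b) = ee N a * ee N b"
  unfolding ee_def by (simp add: add_divide_distrib distrib_left exp_add[symmetric])

lemma ee_mult: "ee N (a * b) = ee N a ^ b"
proof -
  have "2 * of_real pi * \<i> * of_nat (a*b) / of_nat N = of_nat b * (2 * of_real pi * \<i> * of_nat a / of_nat N)"
    by (simp add: mult_ac)
  then have "ee N (a * b) = exp (of_nat b * (2 * of_real pi * \<i> * of_nat a / of_nat N))"
    unfolding ee_def by metis
  moreover have "exp (of_nat b * (2 * of_real pi * \<i> * of_nat a / of_nat N)) = ee N a ^ b"
    unfolding ee_def by (rule exp_of_nat_mult)
  ultimately show ?thesis by simp
qed

lemma ee_N: "N > 0 \<Longrightarrow> ee N N = 1"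
  unfolding ee_def by simp

lemma ee_mod: assumes "N > 0" shows "ee N j = ee N (j mod N)"
proof -
  have "ee N j = ee N (N * (j div N) + j mod N)" by simp
  also have "\<dots> = ee N (j mod N)" using assms by (simp only: ee_add ee_mult ee_N) simp
  finally show ?thesis .
qed

lemma ee_cis: "N > 0 \<Longrightarrow> ee N k = cis (2 * pi * real k / real N)"
  unfolding ee_def cis_conv_exp by (simp add: algebra_simps)

lemma ee_inj: assumes "N > 0" "a < N" "b < N" "ee N a = ee N b" shows "a = b"
  using bij_betw_roots_unity[OF assms(1)] assms unfolding bij_betw_def inj_on_def
  by (simp add: ee_cis)

lemma ee_eq_iff: assumes "N > 0" shows "ee N a = ee N b \<longleftrightarrow> a mod N = b mod N"
proof
  assume "ee N a = ee N b"
  then have "ee N (a mod N) = ee N (b mod N)" using ee_mod[OF assms] by metis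
  then show "a mod N = b mod N" using ee_inj[OF assms] assms by simp
next
  assume "a mod N = b mod N"
  then show "ee N a = ee N b" using ee_mod[OF assms] by metis
qed

lemma ee_root: assumes "N > 0" "z ^ N = 1" shows "\<exists>j<N. z = ee N j"
proof -
  have "z \<in> (\<lambda>k. cis (2 * pi * real k / real N)) ` {..<N}"
    using bij_betw_roots_unity[OF assms(1)] assms(2) unfolding bij_betw_def by auto
  then show ?thesis using ee_cis[OF assms(1)] by auto
qed

lemma ee_pow_N: "N > 0 \<Longrightarrow> ee N j ^ N = 1"
  by (metis ee_N ee_mult mult.commute power_one)

lemma ee_nz: "ee N j \<noteq> 0"
  unfolding ee_def by simp

lemma ee_scale: "d > 0 \<Longrightarrow> ee (d * N) (d * j) = ee N j"
  unfolding ee_def by (simp add: mult.assoc)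

lemma omega_pow: "omega p ^ k = ee p k"
  unfolding omega_def ee_def by (simp add: exp_of_nat_mult[symmetric] algebra_simps)

lemma ee_p_mod: "p > 0 \<Longrightarrow> ee p (a mod p) = ee p a"
  using ee_mod by metis

definition good :: "nat \<Rightarrow> nat \<Rightarrow> (nat \<Rightarrow> complex) \<Rightarrow> bool" where
  "good p m f \<longleftrightarrow> (\<forall>q<p. f q ^ (p ^ m) = 1) \<and> (\<Prod>q<p. f q) = 1"

definition nrm :: "nat \<Rightarrow> (nat \<Rightarrow> complex) \<Rightarrow> nat \<Rightarrow> complex" where
  "nrm p f q = (if q < p then f q else 1)"

lemma good_nz: "p > 0 \<Longrightarrow> good p m f \<Longrightarrow> q < p \<Longrightarrow> f q \<noteq> 0"
  unfolding good_def by (metis power_0_left one_neq_zero zero_less_power power_eq_0_iff)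

lemma good_nrm: "good p m (nrm p f) = good p m f"
  unfolding good_def nrm_def by simp

lemma Smat_pow: assumes p: "p > 0" shows "Smat p \<xi> ^\<^sub>m n = monm p (\<lambda>i. \<xi> i ^ n) 0"
  unfolding Smat_mono mono_pow[OF p]
  by (rule mono_cong) (simp_all add: sh_0)

lemma mono0_eq_one: assumes p: "p > 0" shows "monm p f 0 = 1\<^sub>m p \<longleftrightarrow> (\<forall>i<p. f i = 1)"
proof
  assume h: "monm p f 0 = 1\<^sub>m p"
  show "\<forall>i<p. f i = 1"
  proof (intro allI impI)
    fix i assume i: "i < p"
    have "monm p f 0 $$ (i,i) = f i" using i by (simp add: mono_entry)
    then show "f i = 1" using h i by simp
  qed
next
  assume "\<forall>i<p. f i = 1"
  then show "monm p f 0 = 1\<^sub>m p" unfolding one_mono by (intro mono_cong) auto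
qed

lemma norm_root1: assumes "N > 0" "(z::complex) ^ N = 1" shows "norm z = 1"
proof -
  have "norm z ^ N = 1 ^ N" using assms by (metis norm_one norm_power power_one)
  then show ?thesis using assms(1) power_eq_iff_eq_base[of N "norm z" 1] by simp
qed

lemma Qset_iff: assumes p: "p > 0"
  shows "\<xi> \<in> Qset p m \<longleftrightarrow> good p m \<xi> \<and> (\<forall>q\<ge>p. \<xi> q = 1)"
  unfolding Qset_def good_def Smat_pow[OF p] mono0_eq_one[OF p]
  using norm_root1[of "p^m"] p by auto

lemma SX: assumes p: "p > 0" shows "Smat p \<xi> * Xmat p ^\<^sub>m b = monm p \<xi> (int b)"
proof -
  have "Smat p \<xi> * Xmat p ^\<^sub>m b = monm p \<xi> 0 * monm p (\<lambda>i. \<Prod>s<b. 1) (int b * 1)"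
    unfolding Smat_mono Xmat_mono mono_pow[OF p] ..
  also have "\<dots> = monm p (\<lambda>i. \<xi> i * (\<Prod>s<b. 1)) (0 + int b * 1)"
    by (rule mono_mult[OF p])
  finally show ?thesis by simp
qed

lemma Kset_iff: assumes p: "p > 0"
  shows "M \<in> Kset p m \<longleftrightarrow> (\<exists>f b. good p m f \<and> M = monm p f b)"
proof
  assume "M \<in> Kset p m"
  then obtain \<xi> b where "\<xi> \<in> Qset p m" "M = Smat p \<xi> * (Xmat p ^\<^sub>m b)"
    unfolding Kset_def by auto
  then show "\<exists>f b. good p m f \<and> M = monm p f b"
    using Qset_iff[OF p] SX[OF p] by blast
next
  assume "\<exists>f b. good p m f \<and> M = monm p f b"
  then obtain f b where f: "good p m f" and M: "M = monm p f b" by blast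
  have "nrm p f \<in> Qset p m" using f Qset_iff[OF p] good_nrm by (auto simp: nrm_def)
  moreover have "M = Smat p (nrm p f) * Xmat p ^\<^sub>m nat (b mod int p)"
    unfolding SX[OF p] M using p by (intro mono_cong) (auto simp: nrm_def)
  moreover have "nat (b mod int p) < p" using p by (simp add: nat_less_iff)
  ultimately show "M \<in> Kset p m" unfolding Kset_def by blast
qed

lemma dec_mono:
  assumes p: "p > 0" and f: "good p m f"
  shows "dec_b p m (monm p f b) = nat (b mod int p)" and "dec_xi p m (monm p f b) = nrm p f"
proof -
  have nz: "\<And>i. i < p \<Longrightarrow> f i \<noteq> 0" using good_nz[OF p f] .
  have Q: "nrm p f \<in> Qset p m" using f Qset_iff[OF p] good_nrm by (auto simp: nrm_def)
  have E: "monm p f b = Smat p (nrm p f) * Xmat p ^\<^sub>m nat (b mod int p)"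
    unfolding SX[OF p] using p by (intro mono_cong) (auto simp: nrm_def)
  have lt: "nat (b mod int p) < p" using p by (simp add: nat_less_iff)
  have U: "b mod int p = int b' \<and> (\<forall>i<p. \<xi> i = f i)"
    if "b' < p" "monm p f b = Smat p \<xi> * Xmat p ^\<^sub>m b'" for b' \<xi>
    using mono_eq_D[OF p nz, where b=b and g=\<xi> and c="int b'"] that SX[OF p] by simp
  show "dec_b p m (monm p f b) = nat (b mod int p)"
    unfolding dec_b_def
  proof (rule the_equality)
    show "nat (b mod int p) < p \<and> (\<exists>\<xi>\<in>Qset p m. monm p f b = Smat p \<xi> * Xmat p ^\<^sub>m nat (b mod int p))"
      using lt Q E by blast
  next
    fix b' assume "b' < p \<and> (\<exists>\<xi>\<in>Qset p m. monm p f b = Smat p \<xi> * Xmat p ^\<^sub>m b')"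
    then show "b' = nat (b mod int p)" using U by force
  qed
  show "dec_xi p m (monm p f b) = nrm p f"
    unfolding dec_xi_def
  proof (rule the_equality)
    show "nrm p f \<in> Qset p m \<and> (\<exists>b'<p. monm p f b = Smat p (nrm p f) * Xmat p ^\<^sub>m b')"
      using lt Q E by blast
  next
    fix \<xi> assume h: "\<xi> \<in> Qset p m \<and> (\<exists>b'<p. monm p f b = Smat p \<xi> * Xmat p ^\<^sub>m b')"
    then have "\<forall>i<p. \<xi> i = f i" using U by blast
    moreover have "\<forall>q\<ge>p. \<xi> q = 1" using h Qset_iff[OF p] by blast
    ultimately show "\<xi> = nrm p f" by (auto simp: nrm_def not_less)
  qed
qed

definition polyc :: "nat \<Rightarrow> (nat \<Rightarrow> nat) \<Rightarrow> nat \<Rightarrow> nat" where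
  "polyc p c q = (\<Sum>a<p. c a * q ^ a)"

lemma fermat_int:
  assumes p: "prime p" "odd p" and q: "q < p" and r: "r < p" and qr: "q \<noteq> r"
  shows "[(int q - int r) ^ (p - 1) = 1] (mod int p)"
proof -
  define d where "d = nat \<bar>int q - int r\<bar>"
  have d0: "d > 0" "d < p" using q r qr by (auto simp: d_def)
  have "\<not> p dvd d" using d0 by (meson nat_dvd_not_less)
  then have "[d ^ (p - 1) = 1] (mod p)" using fermat_theorem p by blast
  then have "[int d ^ (p - 1) = 1] (mod int p)" by (metis cong_int_iff of_nat_1 of_nat_power)
  moreover have "int d ^ (p - 1) = (int q - int r) ^ (p - 1)"
    using p(2) by (simp add: d_def power_even_abs)
  ultimately show ?thesis by simp
qed

lemma interp_exists:
  fixes w :: "nat \<Rightarrow> int"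
  assumes p: "prime p" "odd p"
  shows "\<exists>c. (\<forall>a. c a < p) \<and> (\<forall>q<p. [int (polyc p c q) = w q] (mod int p))"
proof -
  have p1: "p > 1" using p prime_gt_1_nat by blast
  define L :: "int poly" where "L = (\<Sum>r<p. smult (w r) (1 - [:- int r, 1:] ^ (p - 1)))"
  have polyL: "poly L x = (\<Sum>r<p. w r * (1 - (x - int r) ^ (p - 1)))" for x
    unfolding L_def by (simp add: poly_sum)
  have congL: "[poly L (int q) = w q] (mod int p)" if q: "q < p" for q
  proof -
    have "[(\<Sum>r<p. w r * (1 - (int q - int r) ^ (p - 1))) = (\<Sum>r<p. if r = q then w r else 0)] (mod int p)"
    proof (rule cong_sum)
      fix r assume r: "r \<in> {..<p}"
      show "[w r * (1 - (int q - int r) ^ (p - 1)) = (if r = q then w r else 0)] (mod int p)"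
      proof (cases "r = q")
        case True
        then show ?thesis using p1 by (simp add: power_0_left)
      next
        case False
        have "[1 - (int q - int r) ^ (p - 1) = 1 - 1] (mod int p)"
          using fermat_int[OF p q _ ] r False by (intro cong_diff) auto
        then have "[w r * (1 - (int q - int r) ^ (p - 1)) = w r * 0] (mod int p)"
          by (intro cong_mult) auto
        then show ?thesis using False by simp
      qed
    qed
    then show ?thesis using q by (simp add: polyL)
  qed
  have degL: "degree L \<le> p - 1"
    unfolding L_def
  proof (rule degree_sum_le)
    fix r
    have "degree ([:- int r, 1:] ^ (p - 1)) \<le> p - 1"
      using degree_power_le[of "[:- int r, 1:]" "p - 1"] by simp
    then have "degree (1 - [:- int r, 1:] ^ (p - 1)) \<le> p - 1"
      by (intro degree_diff_le) auto
    then show "degree (smult (w r) (1 - [:- int r, 1:] ^ (p - 1))) \<le> p - 1"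
      using degree_smult_le order_trans by blast
  qed simp
  have polyL2: "poly L x = (\<Sum>a<p. coeff L a * x ^ a)" for x
  proof -
    have "poly L x = (\<Sum>a\<le>degree L. coeff L a * x ^ a)" by (rule poly_altdef)
    also have "\<dots> = (\<Sum>a<p. coeff L a * x ^ a)"
    proof (rule sum.mono_neutral_left)
      show "{..degree L} \<subseteq> {..<p}" using degL p1 by auto
      show "\<forall>i\<in>{..<p} - {..degree L}. coeff L i * x ^ i = 0" by (auto simp: coeff_eq_0)
    qed simp
    finally show ?thesis .
  qed
  define c where "c a = nat (coeff L a mod int p)" for a
  have c_lt: "c a < p" for a using p1 by (simp add: c_def nat_less_iff)
  have "[int (polyc p c q) = w q] (mod int p)" if q: "q < p" for q
  proof -
    have "int (polyc p c q) = (\<Sum>a<p. (coeff L a mod int p) * int q ^ a)"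
      using p1 by (simp add: polyc_def c_def)
    also have "[\<dots> = (\<Sum>a<p. coeff L a * int q ^ a)] (mod int p)"
      by (intro cong_sum cong_mult) auto
    also have "(\<Sum>a<p. coeff L a * int q ^ a) = poly L (int q)" by (simp add: polyL2)
    also have "[\<dots> = w q] (mod int p)" by (rule congL[OF q])
    finally show ?thesis .
  qed
  then show ?thesis using c_lt by blast
qed

lemma interp_unique:
  assumes p: "prime p" "odd p"
    and c: "\<forall>a<p. c a < p" and c': "\<forall>a<p. c' a < p"
    and eq: "\<forall>q<p. polyc p c q mod p = polyc p c' q mod p"
  shows "\<forall>a<p. c a = c' a"
proof -
  define A where "A = (PiE {..<p} (\<lambda>_. {..<p}) :: (nat \<Rightarrow> nat) set)"
  define F where "F c = restrict (\<lambda>q. polyc p c q mod p) {..<p}" for c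
  have p0: "p > 0" using p prime_gt_0_nat by blast
  have polyc_restrict: "polyc p (restrict c {..<p}) = polyc p c" for c
    by (rule ext) (simp add: polyc_def)
  have FA: "F ` A \<subseteq> A"
  proof
    fix x assume "x \<in> F ` A"
    then obtain c where "x = F c" by blast
    then show "x \<in> A" unfolding F_def A_def using p0 by (simp add: restrict_PiE_iff)
  qed
  have surj: "A \<subseteq> F ` A"
  proof
    fix g assume g: "g \<in> A"
    obtain d where d: "\<forall>a. d a < p" "\<forall>q<p. [int (polyc p d q) = int (g q)] (mod int p)"
      using interp_exists[OF p, of "\<lambda>q. int (g q)"] by blast
    have "restrict d {..<p} \<in> A" using d(1) unfolding A_def by (simp add: restrict_PiE_iff)
    moreover have "F (restrict d {..<p}) = g"
    proof -
      have "polyc p d q mod p = g q" if "q < p" for q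
      proof -
        have "[polyc p d q = g q] (mod p)" using d(2) that by (simp add: cong_int_iff)
        moreover have "g q < p" using PiE_mem[OF g[unfolded A_def], of q] that by simp
        ultimately show ?thesis by (simp add: cong_def)
      qed
      then have "restrict (\<lambda>q. polyc p d q mod p) {..<p} = restrict g {..<p}"
        by (intro restrict_ext) simp
      moreover have "restrict g {..<p} = g" using g unfolding A_def by (rule PiE_restrict)
      ultimately show ?thesis unfolding F_def polyc_restrict by simp
    qed
    ultimately show "g \<in> F ` A" by (metis image_eqI)
  qed
  have "F ` A = A" using FA surj by blast
  moreover have finA: "finite A" unfolding A_def by (intro finite_PiE) auto
  ultimately have injF: "inj_on F A" using eq_card_imp_inj_on[OF finA, of F] by (simp only:)
  have cA: "restrict c {..<p} \<in> A" "restrict c' {..<p} \<in> A" using c c' unfolding A_def by (simp_all add: restrict_PiE_iff)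
  have Feq: "F (restrict c {..<p}) = F (restrict c' {..<p})"
    unfolding F_def polyc_restrict using eq by (intro restrict_ext) simp
  have rr: "restrict c {..<p} = restrict c' {..<p}" by (rule inj_onD[OF injF Feq cA])
  show ?thesis
  proof (intro allI impI)
    fix a assume "a < p"
    then show "c a = c' a" using fun_cong[OF rr, of a] by simp
  qed
qed

definition valm :: "nat \<Rightarrow> nat \<Rightarrow> (nat \<Rightarrow> nat \<Rightarrow> nat) \<Rightarrow> nat \<Rightarrow> nat" where
  "valm p m \<theta> q = (\<Sum>j\<in>{1..m}. p ^ (m - j) * polyc p (\<theta> j) q)"

definition thP :: "nat \<Rightarrow> nat \<Rightarrow> (nat \<Rightarrow> complex) \<Rightarrow> (nat \<Rightarrow> nat \<Rightarrow> nat) \<Rightarrow> bool" where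
  "thP p m \<xi> \<theta> \<longleftrightarrow> (\<forall>j a. \<theta> j a < p) \<and>
      (\<forall>j a. (j < 1 \<or> j > m \<or> a \<ge> p) \<longrightarrow> \<theta> j a = 0) \<and>
      (\<forall>q<p. \<xi> q = exp (\<Sum>j\<in>{1..m}. 2 * of_real pi * \<i> / of_nat (p ^ j)
                                    * of_nat (\<Sum>a<p. \<theta> j a * q ^ a)))"

lemma theta_thP: "theta p m \<xi> = (THE \<theta>. thP p m \<xi> \<theta>)"
  unfolding theta_def thP_def ..

lemma cong_scale_nat: "(c::nat) \<noteq> 0 \<Longrightarrow> [c * a = c * b] (mod c * n) \<longleftrightarrow> [a = b] (mod n)"
  by (simp add: cong_def mod_mult_mult1)

lemma cong_scale_int: "(c::int) \<noteq> 0 \<Longrightarrow> [c * a = c * b] (mod c * n) \<longleftrightarrow> [a = b] (mod n)"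
  by (simp add: cong_def mod_mult_mult1)

lemma ee_0: "ee N 0 = 1" by (simp add: ee_def)

lemma ee_sum: "finite A \<Longrightarrow> ee N (\<Sum>j\<in>A. f j) = (\<Prod>j\<in>A. ee N (f j))"
  by (induction A rule: finite_induct) (simp_all add: ee_add ee_0)

lemma prod_form:
  "exp (\<Sum>j\<in>{1..m}. 2 * of_real pi * \<i> / of_nat (p ^ j) * of_nat (\<Sum>a<p. \<theta> j a * q ^ a))
   = (\<Prod>j\<in>{1..m}. ee (p ^ j) (polyc p (\<theta> j) q))"
  unfolding exp_sum[OF finite_atLeastAtMost] ee_def polyc_def
  by (intro prod.cong refl arg_cong[where f=exp]) simp

lemma prod_val:
  assumes p: "p > 0"
  shows "(\<Prod>j\<in>{1..m}. ee (p ^ j) (polyc p (\<theta> j) q)) = ee (p ^ m) (valm p m \<theta> q)"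
proof -
  have "ee (p ^ m) (valm p m \<theta> q) = (\<Prod>j\<in>{1..m}. ee (p ^ m) (p ^ (m - j) * polyc p (\<theta> j) q))"
    unfolding valm_def by (rule ee_sum) simp
  also have "\<dots> = (\<Prod>j\<in>{1..m}. ee (p ^ j) (polyc p (\<theta> j) q))"
  proof (rule prod.cong)
    fix j assume j: "j \<in> {1..m}"
    then have "p ^ m = p ^ (m - j) * p ^ j" by (simp add: power_add[symmetric])
    then show "ee (p ^ m) (p ^ (m - j) * polyc p (\<theta> j) q) = ee (p ^ j) (polyc p (\<theta> j) q)"
      using ee_scale[of "p ^ (m - j)" "p ^ j" "polyc p (\<theta> j) q"] p by simp
  qed simp
  finally show ?thesis by simp
qed

lemma thP_iff:
  assumes p: "p > 0"
  shows "thP p m \<xi> \<theta> \<longleftrightarrow> (\<forall>j a. \<theta> j a < p) \<and>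
      (\<forall>j a. (j < 1 \<or> j > m \<or> a \<ge> p) \<longrightarrow> \<theta> j a = 0) \<and>
      (\<forall>q<p. \<xi> q = (\<Prod>j\<in>{1..m}. ee (p ^ j) (polyc p (\<theta> j) q)))"
  unfolding thP_def prod_form ..

lemma thP_iff_val:
  assumes p: "p > 0"
  shows "thP p m \<xi> \<theta> \<longleftrightarrow> (\<forall>j a. \<theta> j a < p) \<and>
      (\<forall>j a. (j < 1 \<or> j > m \<or> a \<ge> p) \<longrightarrow> \<theta> j a = 0) \<and>
      (\<forall>q<p. \<xi> q = ee (p ^ m) (valm p m \<theta> q))"
  unfolding thP_iff[OF p] prod_val[OF p] ..

lemma valm_Suc: "valm p (Suc m) \<theta> q = p * valm p m \<theta> q + polyc p (\<theta> (Suc m)) q"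
proof -
  have "{1..Suc m} = insert (Suc m) {1..m}" by auto
  then have "valm p (Suc m) \<theta> q = p ^ 0 * polyc p (\<theta> (Suc m)) q + (\<Sum>j\<in>{1..m}. p ^ (Suc m - j) * polyc p (\<theta> j) q)"
    unfolding valm_def by simp
  also have "(\<Sum>j\<in>{1..m}. p ^ (Suc m - j) * polyc p (\<theta> j) q) = p * valm p m \<theta> q"
    unfolding valm_def sum_distrib_left
    by (intro sum.cong refl) (simp add: Suc_diff_le)
  finally show ?thesis by simp
qed

lemma polyc_cong: "(\<And>a. a < p \<Longrightarrow> c a = c' a) \<Longrightarrow> polyc p c = polyc p c'"
  unfolding polyc_def by (intro ext sum.cong) auto

lemma val_unique:
  assumes p: "prime p" "odd p"
  shows "(\<forall>j a. \<theta> j a < p) \<Longrightarrow> (\<forall>j a. \<theta>' j a < p) \<Longrightarrow>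
     (\<forall>q<p. [valm p m \<theta> q = valm p m \<theta>' q] (mod p ^ m)) \<Longrightarrow>
     (\<forall>j\<in>{1..m}. \<forall>a<p. \<theta> j a = \<theta>' j a)"
proof (induction m)
  case 0
  then show ?case by simp
next
  case (Suc m)
  have p0: "p > 0" using p prime_gt_0_nat by blast
  have top: "\<forall>a<p. \<theta> (Suc m) a = \<theta>' (Suc m) a"
  proof (rule interp_unique[OF p])
    show "\<forall>a<p. \<theta> (Suc m) a < p" "\<forall>a<p. \<theta>' (Suc m) a < p" using Suc.prems by auto
    show "\<forall>q<p. polyc p (\<theta> (Suc m)) q mod p = polyc p (\<theta>' (Suc m)) q mod p"
    proof (intro allI impI)
      fix q assume q: "q < p"
      have "[valm p (Suc m) \<theta> q = valm p (Suc m) \<theta>' q] (mod p)"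
        using Suc.prems(3) q cong_dvd_modulus_nat[of _ _ "p ^ Suc m" p] by simp
      then show "polyc p (\<theta> (Suc m)) q mod p = polyc p (\<theta>' (Suc m)) q mod p"
        unfolding valm_Suc cong_def by simp
    qed
  qed
  then have pe: "polyc p (\<theta> (Suc m)) = polyc p (\<theta>' (Suc m))" by (intro polyc_cong) auto
  have "\<forall>q<p. [valm p m \<theta> q = valm p m \<theta>' q] (mod p ^ m)"
  proof (intro allI impI)
    fix q assume q: "q < p"
    have "[p * valm p m \<theta> q = p * valm p m \<theta>' q] (mod p * p ^ m)"
      using Suc.prems(3) q unfolding valm_Suc pe by (simp add: cong_add_rcancel_nat)
    then show "[valm p m \<theta> q = valm p m \<theta>' q] (mod p ^ m)"
      using cong_scale_nat[of p] p0 by simp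
  qed
  then have "\<forall>j\<in>{1..m}. \<forall>a<p. \<theta> j a = \<theta>' j a" using Suc.IH Suc.prems by blast
  then show ?case using top by (auto simp: le_Suc_eq)
qed

lemma thP_unique:
  assumes p: "prime p" "odd p" and h: "thP p m \<xi> \<theta>" "thP p m \<xi> \<theta>'"
  shows "\<theta> = \<theta>'"
proof -
  have p0: "p > 0" using p prime_gt_0_nat by blast
  note h1 = h(1)[unfolded thP_iff_val[OF p0]]
  note h2 = h(2)[unfolded thP_iff_val[OF p0]]
  have b: "\<forall>j a. \<theta> j a < p" "\<forall>j a. \<theta>' j a < p" using h1 h2 by simp_all
  have "\<forall>q<p. [valm p m \<theta> q = valm p m \<theta>' q] (mod p ^ m)"
  proof (intro allI impI)
    fix q assume q: "q < p"
    have "ee (p ^ m) (valm p m \<theta> q) = ee (p ^ m) (valm p m \<theta>' q)"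
      using h1 h2 q by metis
    then show "[valm p m \<theta> q = valm p m \<theta>' q] (mod p ^ m)"
      unfolding cong_def using ee_eq_iff[of "p ^ m"] p0 by simp
  qed
  then have in_range: "\<forall>j\<in>{1..m}. \<forall>a<p. \<theta> j a = \<theta>' j a" using val_unique[OF p b] by blast
  show ?thesis
  proof (intro ext)
    fix j a
    show "\<theta> j a = \<theta>' j a"
    proof (cases "j \<in> {1..m} \<and> a < p")
      case True then show ?thesis using in_range by blast
    next
      case False
      then have "j < 1 \<or> j > m \<or> a \<ge> p" by auto
      then show ?thesis using h1 h2 by metis
    qed
  qed
qed

lemma theta_eq: "prime p \<Longrightarrow> odd p \<Longrightarrow> thP p m \<xi> \<theta> \<Longrightarrow> theta p m \<xi> = \<theta>"
  unfolding theta_thP by (rule the_equality) (auto intro: thP_unique)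

lemma val_exists:
  assumes p: "prime p" "odd p"
  shows "\<exists>\<theta>. (\<forall>j a. \<theta> j a < p) \<and> (\<forall>j a. (j < 1 \<or> j > m \<or> a \<ge> p) \<longrightarrow> \<theta> j a = 0) \<and>
           (\<forall>q<p. [int (valm p m \<theta> q) = w q] (mod int (p ^ m)))"
proof (induction m arbitrary: w)
  case 0
  have p0: "p > 0" using p prime_gt_0_nat by blast
  show ?case by (rule exI[of _ "\<lambda>_ _. 0"]) (simp add: p0)
next
  case (Suc m)
  have p0: "p > 0" using p prime_gt_0_nat by blast
  obtain c where c: "\<forall>a. c a < p" "\<forall>q<p. [int (polyc p c q) = w q] (mod int p)"
    using interp_exists[OF p, of w] by blast
  define w' where "w' q = (w q - int (polyc p c q)) div int p" for q
  obtain \<theta>0 where t0: "\<forall>j a. \<theta>0 j a < p" "\<forall>j a. (j < 1 \<or> j > m \<or> a \<ge> p) \<longrightarrow> \<theta>0 j a = 0"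
     "\<forall>q<p. [int (valm p m \<theta>0 q) = w' q] (mod int (p ^ m))"
    using Suc.IH[of w'] by blast
  define \<theta> where "\<theta> j a = (if j = Suc m then (if a < p then c a else 0) else \<theta>0 j a)" for j a
  have b: "\<forall>j a. \<theta> j a < p" using c(1) t0(1) p0 by (simp add: \<theta>_def)
  have z: "\<forall>j a. (j < 1 \<or> j > Suc m \<or> a \<ge> p) \<longrightarrow> \<theta> j a = 0" using t0(2) by (simp add: \<theta>_def)
  have th: "j \<le> m \<Longrightarrow> \<theta> j = \<theta>0 j" for j by (rule ext) (simp add: \<theta>_def)
  have v: "valm p m \<theta> q = valm p m \<theta>0 q" for q
    unfolding valm_def by (intro sum.cong refl) (simp add: th)
  have pc: "polyc p (\<theta> (Suc m)) = polyc p c" by (intro polyc_cong) (simp add: \<theta>_def)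
  have "[int (valm p (Suc m) \<theta> q) = w q] (mod int (p ^ Suc m))" if q: "q < p" for q
  proof -
    have dv: "int p dvd w q - int (polyc p c q)" using c(2) q by (simp add: cong_iff_dvd_diff dvd_diff_commute)
    have wq: "w q = int p * w' q + int (polyc p c q)"
      using dv unfolding w'_def by simp
    have "[int p * int (valm p m \<theta>0 q) = int p * w' q] (mod int p * int (p ^ m))"
      using t0(3) q cong_scale_int[of "int p"] p0 by simp
    then have "[int p * int (valm p m \<theta>0 q) + int (polyc p c q) = int p * w' q + int (polyc p c q)] (mod int p * int (p ^ m))"
      by (intro cong_add) auto
    then show ?thesis unfolding valm_Suc v pc wq by simp
  qed
  then show ?case using b z by blast
qed

lemma theta_exists:
  assumes p: "prime p" "odd p" and r: "\<forall>q<p. \<xi> q ^ (p ^ m) = 1"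
  shows "thP p m \<xi> (theta p m \<xi>)"
proof -
  have p0: "p > 0" using p prime_gt_0_nat by blast
  have "\<forall>q. \<exists>v. q < p \<longrightarrow> \<xi> q = ee (p ^ m) v" using ee_root[of "p ^ m"] r p0 by auto
  then obtain v where v: "\<forall>q<p. \<xi> q = ee (p ^ m) (v q)" by metis
  obtain \<theta> where t: "\<forall>j a. \<theta> j a < p" "\<forall>j a. (j < 1 \<or> j > m \<or> a \<ge> p) \<longrightarrow> \<theta> j a = 0"
     "\<forall>q<p. [int (valm p m \<theta> q) = int (v q)] (mod int (p ^ m))"
    using val_exists[OF p, of m "\<lambda>q. int (v q)"] by blast
  have "thP p m \<xi> \<theta>"
    unfolding thP_iff_val[OF p0]
  proof (intro conjI allI impI)
    fix q assume q: "q < p"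
    have "valm p m \<theta> q mod p ^ m = v q mod p ^ m"
      using t(3) q by (simp add: cong_int_iff[symmetric] cong_def[symmetric] del: of_nat_power) 
    then show "\<xi> q = ee (p ^ m) (valm p m \<theta> q)" using v q ee_eq_iff[of "p ^ m"] p0 by simp
  qed (use t in auto)
  then show ?thesis using theta_eq[OF p] by simp
qed

lemma sum_ifs:
  fixes x y q :: nat
  assumes "p \<ge> 2"
  shows "(\<Sum>a<p. (if a = 0 then x else if a = 1 then y else 0) * q ^ a) = x + y * q"
proof -
  have "(\<Sum>a<p. (if a = 0 then x else if a = 1 then y else 0) * q ^ a) =
        (\<Sum>a\<in>{0,1}. (if a = 0 then x else if a = 1 then y else 0) * q ^ a)"
    by (rule sum.mono_neutral_right) (use assms in auto)
  then show ?thesis by simp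
qed

lemma prod_delta1:
  fixes f :: "nat \<Rightarrow> complex"
  assumes "m \<ge> 1" "\<And>j. j \<in> {1..m} \<Longrightarrow> j \<noteq> 1 \<Longrightarrow> f j = 1"
  shows "(\<Prod>j\<in>{1..m}. f j) = (f 1 :: complex)"
proof -
  have "(\<Prod>j\<in>{1..m}. f j) = (\<Prod>j\<in>{1..m}. if j = 1 then f 1 else 1)"
    by (rule prod.cong) (use assms in auto)
  also have "\<dots> = f 1" using assms(1) by (subst prod.delta) auto
  finally show ?thesis .
qed

lemma ee_cong: "p > 0 \<Longrightarrow> [a = b] (mod p) \<Longrightarrow> ee p a = ee p b"
  using ee_eq_iff by (simp add: cong_def)

lemma theta_shift:
  assumes p: "prime p" "odd p" and m: "m \<ge> 1" and r: "\<forall>q<p. \<xi> q ^ (p ^ m) = 1"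
    and h: "\<forall>q<p. \<xi>' q = ee p (k + l * q) * \<xi> q"
  shows "\<forall>q<p. Pfun p m \<xi>' q = ee p (k + l * q) * Pfun p m \<xi> q"
proof -
  have p0: "p > 0" using p prime_gt_0_nat by blast
  have p2: "p \<ge> 2" using p prime_ge_2_nat by blast
  define \<theta> where "\<theta> = theta p m \<xi>"
  have T: "thP p m \<xi> \<theta>" unfolding \<theta>_def by (rule theta_exists[OF p r])
  note T' = T[unfolded thP_iff[OF p0]]
  define \<theta>' where "\<theta>' j a = (if j = 1 \<and> a = 0 then (\<theta> 1 0 + k) mod p
      else if j = 1 \<and> a = 1 then (\<theta> 1 1 + l) mod p else \<theta> j a)" for j a
  have pc1: "[polyc p (\<theta>' 1) q = (k + l * q) + polyc p (\<theta> 1) q] (mod p)" for q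
  proof -
    have "[polyc p (\<theta>' 1) q = (\<Sum>a<p. (\<theta> 1 a + (if a = 0 then k else if a = 1 then l else 0)) * q ^ a)] (mod p)"
      unfolding polyc_def
      by (intro cong_sum cong_mult) (auto simp: \<theta>'_def cong_def mod_add_left_eq)
    also have "(\<Sum>a<p. (\<theta> 1 a + (if a = 0 then k else if a = 1 then l else 0)) * q ^ a) =
        polyc p (\<theta> 1) q + (k + l * q)"
      unfolding polyc_def distrib_right sum.distrib sum_ifs[OF p2] ..
    finally show ?thesis by (simp add: add.commute)
  qed
  have T2: "thP p m \<xi>' \<theta>'"
    unfolding thP_iff[OF p0]
  proof (intro conjI allI impI)
    fix j a show "\<theta>' j a < p" using T' p0 by (simp add: \<theta>'_def)
  next
    fix j a assume "j < 1 \<or> m < j \<or> p \<le> a"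
    then show "\<theta>' j a = 0" using T' m p2 by (auto simp: \<theta>'_def)
  next
    fix q assume q: "q < p"
    have "(\<Prod>j\<in>{1..m}. ee (p ^ j) (polyc p (\<theta>' j) q)) =
          (\<Prod>j\<in>{1..m}. (if j = 1 then ee p (k + l * q) else 1) * ee (p ^ j) (polyc p (\<theta> j) q))"
    proof (rule prod.cong)
      fix j assume j: "j \<in> {1..m}"
      show "ee (p ^ j) (polyc p (\<theta>' j) q) = (if j = 1 then ee p (k + l * q) else 1) * ee (p ^ j) (polyc p (\<theta> j) q)"
      proof (cases "j = 1")
        case True
        then show ?thesis using ee_cong[OF p0 pc1[of q]] by (simp add: ee_add)
      next
        case False
        then have "\<theta>' j = \<theta> j" by (intro ext) (simp add: \<theta>'_def)
        then show ?thesis using False by simp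
      qed
    qed simp
    also have "\<dots> = (\<Prod>j\<in>{1..m}. (if j = 1 then ee p (k + l * q) else 1)) * (\<Prod>j\<in>{1..m}. ee (p ^ j) (polyc p (\<theta> j) q))"
      by (rule prod.distrib)
    also have "(\<Prod>j\<in>{1..m}. (if j = 1 then ee p (k + l * q) else 1)) = ee p (k + l * q)"
      using m by (subst prod.delta) auto
    also have "(\<Prod>j\<in>{1..m}. ee (p ^ j) (polyc p (\<theta> j) q)) = \<xi> q" using T' q by simp
    finally show "\<xi>' q = (\<Prod>j\<in>{1..m}. ee (p ^ j) (polyc p (\<theta>' j) q))" using h q by simp
  qed
  have th': "theta p m \<xi>' = \<theta>'" by (rule theta_eq[OF p T2])
  show ?thesis
  proof (intro allI impI)
    fix q assume q: "q < p"
    have "[(\<theta> 1 0 + k) mod p + (\<theta> 1 1 + l) mod p * q = (k + l * q) + (\<theta> 1 0 + \<theta> 1 1 * q)] (mod p)"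
    proof -
      have "[(\<theta> 1 0 + k) mod p + (\<theta> 1 1 + l) mod p * q = (\<theta> 1 0 + k) + (\<theta> 1 1 + l) * q] (mod p)"
        by (intro cong_add cong_mult) (simp_all add: cong_def)
      then show ?thesis by (simp add: algebra_simps)
    qed
    then have "ee p ((\<theta> 1 0 + k) mod p + (\<theta> 1 1 + l) mod p * q) = ee p ((k + l * q) + (\<theta> 1 0 + \<theta> 1 1 * q))"
      by (rule ee_cong[OF p0])
    also have "\<dots> = ee p (k + l * q) * ee p (\<theta> 1 0 + \<theta> 1 1 * q)" by (rule ee_add)
    finally have "ee p ((\<theta> 1 0 + k) mod p + (\<theta> 1 1 + l) mod p * q) = ee p (k + l * q) * ee p (\<theta> 1 0 + \<theta> 1 1 * q)" .
    then show "Pfun p m \<xi>' q = ee p (k + l * q) * Pfun p m \<xi> q"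
      using q p2 unfolding Pfun_def th' \<theta>_def[symmetric] omega_pow by (simp add: \<theta>'_def)
  qed
qed

lemma theta_lin:
  assumes p: "prime p" "odd p" and m: "m \<ge> 1"
    and h: "\<forall>q<p. \<xi> q = ee p (k + l * q)"
  shows "\<forall>q<p. Rfun p m \<xi> q = ee p (k + l * q)"
proof -
  have p0: "p > 0" using p prime_gt_0_nat by blast
  have p2: "p \<ge> 2" using p prime_ge_2_nat by blast
  define \<theta>' :: "nat \<Rightarrow> nat \<Rightarrow> nat" where "\<theta>' j a = (if j = 1 \<and> a = 0 then k mod p
      else if j = 1 \<and> a = 1 then l mod p else 0)" for j a
  have pc: "polyc p (\<theta>' 1) q = k mod p + l mod p * q" for q
  proof -
    have "polyc p (\<theta>' 1) q = (\<Sum>a<p. (if a = 0 then k mod p else if a = 1 then l mod p else 0) * q ^ a)"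
      unfolding polyc_def by (intro sum.cong refl) (simp add: \<theta>'_def)
    then show ?thesis using sum_ifs[OF p2] by simp
  qed
  have pc0: "j \<noteq> 1 \<Longrightarrow> polyc p (\<theta>' j) q = 0" for j q
    unfolding polyc_def by (simp add: \<theta>'_def)
  have T2: "thP p m \<xi> \<theta>'"
    unfolding thP_iff[OF p0]
  proof (intro conjI allI impI)
    fix j a show "\<theta>' j a < p" using p0 by (simp add: \<theta>'_def)
  next
    fix j a assume "j < 1 \<or> m < j \<or> p \<le> a"
    then show "\<theta>' j a = 0" using m p2 by (auto simp: \<theta>'_def)
  next
    fix q assume q: "q < p"
    have "(\<Prod>j\<in>{1..m}. ee (p ^ j) (polyc p (\<theta>' j) q)) = ee (p ^ 1) (polyc p (\<theta>' 1) q)"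
      by (rule prod_delta1[OF m]) (simp add: pc0 ee_0)
    also have "\<dots> = ee p (k + l * q)"
    proof -
      have "[k mod p + l mod p * q = k + l * q] (mod p)"
        by (intro cong_add cong_mult) (simp_all add: cong_def)
      then show ?thesis using ee_cong[OF p0] pc by simp
    qed
    finally show "\<xi> q = (\<Prod>j\<in>{1..m}. ee (p ^ j) (polyc p (\<theta>' j) q))" using h q by simp
  qed
  have th': "theta p m \<xi> = \<theta>'" by (rule theta_eq[OF p T2])
  show ?thesis
  proof (intro allI impI)
    fix q assume q: "q < p"
    have "[k mod p + l mod p * q = k + l * q] (mod p)"
      by (intro cong_add cong_mult) (simp_all add: cong_def)
    then have "ee p (k mod p + l mod p * q) = ee p (k + l * q)" using ee_cong[OF p0] by simp
    then show "Rfun p m \<xi> q = ee p (k + l * q)"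
      using q p2 unfolding Rfun_def th' omega_pow by (simp add: \<theta>'_def)
  qed
qed

lemma pow_add_mat: assumes A: "A \<in> carrier_mat n n" shows "A ^\<^sub>m (a + b) = A ^\<^sub>m a * A ^\<^sub>m b"
proof (induction b)
  case 0
  then show ?case using A by simp
next
  case (Suc b)
  have "A ^\<^sub>m (a + Suc b) = A ^\<^sub>m a * A ^\<^sub>m b * A" using Suc by simp
  also have "\<dots> = A ^\<^sub>m a * (A ^\<^sub>m b * A)"
    using A by (intro assoc_mult_mat[of _ n n _ n _ n]) auto
  finally show ?case by simp
qed

lemma pow_mult_mat: assumes A: "A \<in> carrier_mat n n" shows "A ^\<^sub>m (a * b) = (A ^\<^sub>m a) ^\<^sub>m b"
proof (induction b)
  case 0
  then show ?case using A by simp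
next
  case (Suc b)
  have "A ^\<^sub>m (a * Suc b) = A ^\<^sub>m (a * b) * A ^\<^sub>m a" using pow_add_mat[OF A, of "a * b" a] by (simp add: add.commute)
  then show ?case using Suc by simp
qed

lemma pow_one_mat: "(1\<^sub>m n :: 'a::semiring_1 mat) ^\<^sub>m k = 1\<^sub>m n"
  by (induction k) auto

lemma pow_mod_mat:
  assumes A: "A \<in> carrier_mat n n" and Ap: "A ^\<^sub>m p = 1\<^sub>m n"
  shows "A ^\<^sub>m k = A ^\<^sub>m (k mod p)"
proof -
  have "A ^\<^sub>m k = A ^\<^sub>m (p * (k div p) + k mod p)" by simp
  also have "\<dots> = A ^\<^sub>m (p * (k div p)) * A ^\<^sub>m (k mod p)"
    by (rule pow_add_mat[OF A])
  also have "\<dots> = (A ^\<^sub>m p) ^\<^sub>m (k div p) * A ^\<^sub>m (k mod p)"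
    by (simp only: pow_mult_mat[OF A])
  also have "\<dots> = A ^\<^sub>m (k mod p)" using Ap A by (simp add: pow_one_mat)
  finally show ?thesis .
qed

definition Dm :: "nat \<Rightarrow> nat \<Rightarrow> nat \<Rightarrow> complex mat" where
  "Dm p k l = monm p (\<lambda>i. ee p (k + l * i)) 0"

definition Em :: "nat \<Rightarrow> (nat \<Rightarrow> complex) \<Rightarrow> nat \<Rightarrow> nat \<Rightarrow> nat \<Rightarrow> complex mat" where
  "Em p f k l j = Dm p k l * monm p f 1 ^\<^sub>m j"

lemma mult_sq[simp]: "A \<in> carrier_mat n n \<Longrightarrow> B \<in> carrier_mat n n \<Longrightarrow> A * B \<in> carrier_mat n n"
  by (rule mult_carrier_mat)

lemma Dm_carrier[simp]: "Dm p k l \<in> carrier_mat p p" by (simp add: Dm_def)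
lemma Dm_dim[simp]: "dim_row (Dm p k l) = p" "dim_col (Dm p k l) = p" by (simp_all add: Dm_def)
lemma Em_carrier[simp]: "Em p f k l j \<in> carrier_mat p p" by (simp add: Em_def)
lemma Em_dim[simp]: "dim_row (Em p f k l j) = p" "dim_col (Em p f k l j) = p"
  using carrier_matD[OF Em_carrier[of p f k l j]] by auto

lemma assoc_sq: "A \<in> carrier_mat n n \<Longrightarrow> B \<in> carrier_mat n n \<Longrightarrow> C \<in> carrier_mat n n \<Longrightarrow> A * B * C = A * (B * C)"
  by (rule assoc_mult_mat)

lemma Dm_mult: assumes p: "p > 0" shows "Dm p k l * Dm p k' l' = Dm p (k + k') (l + l')"
  unfolding Dm_def mono_mult[OF p]
  by (rule mono_cong) (simp_all add: sh_0 ee_add[symmetric] algebra_simps)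

lemma Dm_00: "p > 0 \<Longrightarrow> Dm p 0 0 = 1\<^sub>m p"
  unfolding Dm_def one_mono by (rule mono_cong) (simp_all add: ee_0)

lemma Dm_cong: assumes p: "p > 0" "[k = k'] (mod p)" "[l = l'] (mod p)"
  shows "Dm p k l = Dm p k' l'"
  unfolding Dm_def
  by (rule mono_cong) (auto intro!: ee_cong p cong_add cong_mult)

lemma sh1_cong: assumes p: "p > 0" "i < p" shows "[l * sh p 1 i = (p - 1) * l + l * i] (mod p)"
proof -
  have "int (sh p 1 i) = (int i - 1) mod int p" using p by (simp add: int_sh)
  then have "[int l * int (sh p 1 i) = int l * (int i - 1)] (mod int p)"
    by (simp add: cong_def mod_mult_right_eq)
  moreover have "[int l * (int i - 1) = int ((p - 1) * l + l * i)] (mod int p)"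
  proof -
    have e1: "int (p - 1) = int p - 1" using p by simp
    have "int ((p - 1) * l + l * i) = int (p - 1) * int l + int l * int i" by simp
    also have "\<dots> = int l * (int i - 1) + int p * int l" unfolding e1 by (simp add: algebra_simps)
    finally have "int ((p - 1) * l + l * i) = int l * (int i - 1) + int p * int l" .
    then show ?thesis by (simp add: cong_def)
  qed
  ultimately have "[int (l * sh p 1 i) = int ((p - 1) * l + l * i)] (mod int p)"
    using cong_trans by simp
  then show ?thesis using cong_int_iff[of "l * sh p 1 i" "(p - 1) * l + l * i" p] by simp
qed

lemma aux_kt: "k + t + t * j = k + t * Suc j" for k t j :: nat by simp

lemma N_D: assumes p: "p > 0"
  shows "monm p f 1 * Dm p k l = Dm p (k + (p - 1) * l) l * monm p f 1"
  unfolding Dm_def mono_mult[OF p]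
proof (rule mono_cong)
  fix i assume i: "i < p"
  have "ee p (k + l * sh p 1 i) = ee p (k + (p - 1) * l + l * i)"
    using ee_cong[OF p] sh1_cong[OF p i, of l] cong_add[OF cong_refl[of k]] by (simp add: add.assoc)
  then show "f i * ee p (k + l * sh p 1 i) = ee p (k + (p - 1) * l + l * i) * f (sh p 0 i)"
    using i by (simp add: sh_0)
qed simp

lemma Nj_D: assumes p: "p > 0"
  shows "monm p f 1 ^\<^sub>m j * Dm p k l = Dm p (k + (p - 1) * l * j) l * monm p f 1 ^\<^sub>m j"
proof (induction j arbitrary: k)
  case 0
  then show ?case using p by simp
next
  case (Suc j)
  let ?N = "monm p f 1"
  have "?N ^\<^sub>m Suc j * Dm p k l = ?N ^\<^sub>m j * (?N * Dm p k l)"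
    by (simp add: assoc_sq[of _ p])
  also have "\<dots> = ?N ^\<^sub>m j * (Dm p (k + (p - 1) * l) l * ?N)" by (simp add: N_D[OF p])
  also have "\<dots> = (?N ^\<^sub>m j * Dm p (k + (p - 1) * l) l) * ?N"
    by (simp add: assoc_sq[of _ p])
  also have "\<dots> = Dm p (k + (p - 1) * l + (p - 1) * l * j) l * ?N ^\<^sub>m j * ?N" by (simp add: Suc)
  also have "\<dots> = Dm p (k + (p - 1) * l * Suc j) l * ?N ^\<^sub>m Suc j"
    unfolding aux_kt by (simp add: assoc_sq[of _ p])
  finally show ?case .
qed

lemma Em_mult: assumes p: "p > 0"
  shows "Em p f k l j * Em p f k' l' j' = Em p f (k + k' + (p - 1) * l' * j) (l + l') (j + j')"
proof -
  let ?N = "monm p f 1"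
  have "Em p f k l j * Em p f k' l' j' = Dm p k l * ((?N ^\<^sub>m j * Dm p k' l') * ?N ^\<^sub>m j')"
    unfolding Em_def by (simp add: assoc_sq[of _ p] del: assoc_mult_mat)
  also have "\<dots> = Dm p k l * (Dm p (k' + (p - 1) * l' * j) l' * (?N ^\<^sub>m j * ?N ^\<^sub>m j'))"
    by (simp add: Nj_D[OF p] assoc_sq[of _ p])
  also have "\<dots> = (Dm p k l * Dm p (k' + (p - 1) * l' * j) l') * ?N ^\<^sub>m (j + j')"
    by (simp add: pow_add_mat[of _ p] assoc_sq[of _ p])
  also have "\<dots> = Em p f (k + k' + (p - 1) * l' * j) (l + l') (j + j')"
    unfolding Em_def Dm_mult[OF p] by (simp add: add.assoc)
  finally show ?thesis .
qed

lemma Em_0: "p > 0 \<Longrightarrow> Em p f 0 0 0 = 1\<^sub>m p"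
  unfolding Em_def by (simp add: Dm_00)

lemma Em_pow: assumes p: "p > 0" and r: "r = p - 1"
  shows "Em p f k l j ^\<^sub>m t = Em p f (t * k + r * l * j * (\<Sum>s<t. s)) (l * t) (j * t)"
proof (induction t)
  case 0
  then show ?case using p by (simp add: Em_0)
next
  case (Suc t)
  have "Em p f k l j ^\<^sub>m Suc t = Em p f (t * k + r * l * j * (\<Sum>s<t. s)) (l * t) (j * t) * Em p f k l j"
    using Suc by simp
  also have "\<dots> = Em p f (t * k + r * l * j * (\<Sum>s<t. s) + k + r * l * (j * t)) (l * t + l) (j * t + j)"
    unfolding Em_mult[OF p] r ..
  also have "\<dots> = Em p f (Suc t * k + r * l * j * (\<Sum>s<Suc t. s)) (l * Suc t) (j * Suc t)"
    by (simp add: algebra_simps)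
  finally show ?case .
qed

lemma Em_cong:
  assumes p: "p > 0" and Np: "monm p f 1 ^\<^sub>m p = 1\<^sub>m p"
    and c: "[k = k'] (mod p)" "[l = l'] (mod p)" "[j = j'] (mod p)"
  shows "Em p f k l j = Em p f k' l' j'"
proof -
  have "monm p f 1 ^\<^sub>m j = monm p f 1 ^\<^sub>m j'"
    using pow_mod_mat[OF mono_carrier Np] c(3) unfolding cong_def by metis
  then show ?thesis unfolding Em_def using Dm_cong[OF p c(1,2)] by simp
qed

lemma sum_lessThan_2: "(\<Sum>s<n. s) * 2 = n * (n - 1)" for n :: nat
proof (induction n)
  case 0 then show ?case by simp
next
  case (Suc n) then show ?case by (cases n) (simp_all add: algebra_simps)
qed

lemma sum_lessThan_p:
  fixes p :: nat
  assumes "odd p" shows "p dvd (\<Sum>s<p. s)"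
proof -
  obtain h where "p = 2 * h + 1" using assms oddE by blast
  then have h: "p - 1 = 2 * h" by simp
  have "(\<Sum>s<p. s) * 2 = p * h * 2" using sum_lessThan_2[of p] h by simp
  then show ?thesis by simp
qed

lemma good_mult:
  assumes p: "p > 0" and f: "good p m f" and g: "good p m g"
  shows "good p m (\<lambda>i. f i * g (sh p b i))"
  unfolding good_def
proof (intro conjI allI impI)
  fix q assume q: "q < p"
  have "g (sh p b q) ^ p ^ m = 1" using g sh_lt[OF p] unfolding good_def by blast
  then show "(f q * g (sh p b q)) ^ p ^ m = 1" using f q unfolding good_def by (simp add: power_mult_distrib)
next
  show "(\<Prod>q<p. f q * g (sh p b q)) = 1"
    using f g prod_sh[OF p, of g b] unfolding good_def by (simp add: prod.distrib)
qed

lemma good_one: "good p m (\<lambda>_. 1)" by (simp add: good_def)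

lemma K_pow:
  assumes p: "p > 0" and f: "good p m f"
  shows "\<exists>g. good p m g \<and> monm p f b ^\<^sub>m n = monm p g (int n * b)"
proof (induction n)
  case 0
  then show ?case using good_one by (auto simp: one_mono)
next
  case (Suc n)
  then obtain g where g: "good p m g" "monm p f b ^\<^sub>m n = monm p g (int n * b)" by blast
  have "monm p f b ^\<^sub>m Suc n = monm p (\<lambda>i. g i * f (sh p (int n * b) i)) (int n * b + b)"
    using g(2) mono_mult[OF p] by simp
  moreover have "good p m (\<lambda>i. g i * f (sh p (int n * b) i))" by (rule good_mult[OF p g(1) f])
  ultimately show ?case by (auto simp: algebra_simps)
qed

lemma prod_lin:
  assumes p: "prime p" "odd p"
  shows "(\<Prod>q<p. ee p (k + l * q)) = 1"
proof -
  have p0: "p > 0" using p prime_gt_0_nat by blast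
  have "(\<Prod>q<p. ee p (k + l * q)) = ee p (\<Sum>q<p. k + l * q)" by (simp add: ee_sum)
  also have "(\<Sum>q<p. k + l * q) = p * k + l * (\<Sum>q<p. q)" by (simp add: sum.distrib sum_distrib_left)
  also have "p dvd p * k + l * (\<Sum>q<p. q)" using sum_lessThan_p[OF p(2)] by simp
  then obtain t where "p * k + l * (\<Sum>q<p. q) = p * t" by (elim dvdE)
  then have "ee p (p * k + l * (\<Sum>q<p. q)) = 1" using ee_N[OF p0] by (simp add: ee_mult)
  finally show ?thesis .
qed

lemma ee_pow_pm: assumes p: "p > 0" "m \<ge> 1" shows "ee p x ^ (p ^ m) = 1"
proof -
  obtain m' where "m = Suc m'" using p(2) by (cases m) auto
  then have "ee p x ^ (p ^ m) = (ee p x ^ p) ^ (p ^ m')"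
    by (simp add: power_mult)
  then show ?thesis using ee_pow_N[OF p(1)] by simp
qed

lemma good_D:
  assumes p: "prime p" "odd p" and m: "m \<ge> 1"
  shows "good p m (\<lambda>i. ee p (k + l * i))"
  unfolding good_def
proof (intro conjI allI impI)
  show "(\<Prod>q<p. ee p (k + l * q)) = 1" by (rule prod_lin[OF p])
  fix q show "ee p (k + l * q) ^ p ^ m = 1" using ee_pow_pm[OF _ m] p prime_gt_0_nat by blast
qed

lemma Dm_good: assumes p: "prime p" "odd p" and m: "m \<ge> 1"
  shows "good p m (\<lambda>i. ee p (k + l * i))" by (rule good_D[OF p m])

lemma inv_exists:
  fixes p b :: nat
  assumes p: "prime p" and b: "0 < b" "b < p"
  shows "\<exists>y. y \<in> {1..p-1} \<and> [y * b = 1] (mod p)"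
proof -
  have "\<not> p dvd b"
  proof
    assume "p dvd b"
    then have "p \<le> b" using b(1) by (rule dvd_imp_le)
    then show False using b(2) by simp
  qed
  then have "coprime p b" using prime_imp_coprime_nat[OF p] by blast
  then have "coprime b p" by (simp add: coprime_commute)
  then obtain y0 where y0: "[b * y0 = Suc 0] (mod p)" using cong_solve_coprime_nat by blast
  define y where "y = y0 mod p"
  have p1: "p > 1" using p prime_gt_1_nat by blast
  have "[y * b = y0 * b] (mod p)" unfolding y_def by (intro cong_mult) (simp_all add: cong_def)
  moreover have "[y0 * b = 1] (mod p)" using y0 by (simp add: mult.commute)
  ultimately have yc: "[y * b = 1] (mod p)" by (rule cong_trans)
  have "y \<noteq> 0"
  proof
    assume "y = 0"
    then have "[0 = 1] (mod p)" using yc by simp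
    then show False using p1 by (simp add: cong_def)
  qed
  moreover have "y < p" using p1 by (simp add: y_def)
  ultimately have "y \<in> {1..p-1}" by simp
  then show ?thesis using yc by blast
qed

lemma inv_unique:
  fixes p b y y' :: nat
  assumes p: "prime p" and b: "0 < b" "b < p"
    and y: "y \<in> {1..p-1} \<and> [y * b = 1] (mod p)" and y': "y' \<in> {1..p-1} \<and> [y' * b = 1] (mod p)"
  shows "y = y'"
proof -
  have "\<not> p dvd b"
  proof
    assume "p dvd b"
    then have "p \<le> b" using b(1) by (rule dvd_imp_le)
    then show False using b(2) by simp
  qed
  then have "coprime p b" using prime_imp_coprime_nat[OF p] by blast
  then have cb: "coprime b p" by (simp add: coprime_commute)
  have "[y * b = y' * b] (mod p)" using y y' by (meson cong_sym cong_trans)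
  then have "[y = y'] (mod p)" using cong_mult_rcancel_nat[OF cb] by blast
  moreover have "y < p" "y' < p" using y y' p prime_gt_1_nat by auto
  ultimately show ?thesis using cong_less_modulus_unique_nat by blast
qed

lemma pow1_mat: "A ^\<^sub>m 1 = A"
  by simp

lemma phi1_formula:
  assumes p: "prime p" and b: "dec_b p m X = b" "1 \<le> b" "b < p"
    and y: "y \<in> {1..p-1}" "[y * b = 1] (mod p)"
  shows "phi1 p m X = phi_base p m (X ^\<^sub>m y) ^\<^sub>m b"
proof (cases "b \<le> 1")
  case True
  then have b1: "b = 1" using b by simp
  then have "[y = 1] (mod p)" using y by simp
  then have "y = 1" using y p prime_gt_1_nat cong_less_modulus_unique_nat[of y 1 p] by auto
  then show ?thesis unfolding phi1_def Let_def using b b1 by simp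
next
  case False
  have "(THE y. y \<in> {1..p-1} \<and> [y * b = 1] (mod p)) = y"
  proof (rule the_equality)
    show "y \<in> {1..p-1} \<and> [y * b = 1] (mod p)" using y by simp
  next
    fix y' assume h: "y' \<in> {1..p-1} \<and> [y' * b = 1] (mod p)"
    have "0 < b" using b by simp
    then show "y' = y" using inv_unique[OF p _ b(3) h] y by blast
  qed
  then show ?thesis unfolding phi1_def Let_def using b False by simp
qed

lemma Em_mono:
  assumes p: "prime p" "odd p" and m: "m \<ge> 1" and g: "good p m g"
  shows "\<exists>h. good p m h \<and> Em p g k l j = monm p h (int j)"
proof -
  have p0: "p > 0" using p prime_gt_0_nat by blast
  obtain g' where g': "good p m g'" "monm p g 1 ^\<^sub>m j = monm p g' (int j * 1)"
    using K_pow[OF p0 g] by blast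
  have "Em p g k l j = monm p (\<lambda>i. ee p (k + l * i) * g' (sh p 0 i)) (0 + int j * 1)"
    unfolding Em_def Dm_def g'(2) by (rule mono_mult[OF p0])
  moreover have "good p m (\<lambda>i. ee p (k + l * i) * g' (sh p 0 i))"
    by (rule good_mult[OF p0 good_D[OF p m] g'(1)])
  ultimately show ?thesis by auto
qed

lemma Pfun_lin: "q < p \<Longrightarrow> Pfun p m \<xi> q = ee p (theta p m \<xi> 1 0 + theta p m \<xi> 1 1 * q)"
  by (simp add: Pfun_def omega_pow)

lemma prod_Pfun:
  assumes p: "prime p" "odd p"
  shows "(\<Prod>q<p. Pfun p m \<xi> q) = 1"
proof -
  have "(\<Prod>q<p. Pfun p m \<xi> q) = (\<Prod>q<p. ee p (theta p m \<xi> 1 0 + theta p m \<xi> 1 1 * q))"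
    by (rule prod.cong) (simp_all add: Pfun_lin)
  also have "\<dots> = 1" by (rule prod_lin[OF p])
  finally show ?thesis .
qed

lemma N_pow_p:
  assumes p: "prime p" and f: "(\<Prod>q<p. f q) = 1"
  shows "monm p f 1 ^\<^sub>m p = 1\<^sub>m p"
proof (rule mono_pow_p[OF p _ f])
  have "p > 1" using p prime_gt_1_nat by blast
  then show "\<not> int p dvd 1" by simp
qed

lemma Em_pow_p:
  assumes p: "prime p" "odd p" and Np: "monm p f 1 ^\<^sub>m p = 1\<^sub>m p"
  shows "Em p f k l j ^\<^sub>m p = 1\<^sub>m p"
proof -
  have p0: "p > 0" using p prime_gt_0_nat by blast
  have "Em p f k l j ^\<^sub>m p = Em p f (p * k + (p - 1) * l * j * (\<Sum>s<p. s)) (l * p) (j * p)"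
    by (rule Em_pow[OF p0 refl])
  also have "\<dots> = Em p f 0 0 0"
  proof (rule Em_cong[OF p0 Np])
    have "p dvd p * k + (p - 1) * l * j * (\<Sum>s<p. s)"
      using sum_lessThan_p[OF p(2)] by simp
    then show "[p * k + (p - 1) * l * j * (\<Sum>s<p. s) = 0] (mod p)" by (simp add: cong_0_iff)
    show "[l * p = 0] (mod p)" by (simp add: cong_0_iff)
    show "[j * p = 0] (mod p)" by (simp add: cong_0_iff)
  qed
  also have "\<dots> = 1\<^sub>m p" by (rule Em_0[OF p0])
  finally show ?thesis .
qed

lemma phi_Dm:
  assumes p: "prime p" "odd p" and m: "m \<ge> 1"
  shows "phi1 p m (Dm p k l) = Dm p k l"
proof -
  have p0: "p > 0" using p prime_gt_0_nat by blast
  have gd: "good p m (\<lambda>i. ee p (k + l * i))" by (rule good_D[OF p m])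
  have db: "dec_b p m (Dm p k l) = 0" unfolding Dm_def dec_mono(1)[OF p0 gd] by simp
  have dx: "dec_xi p m (Dm p k l) = nrm p (\<lambda>i. ee p (k + l * i))" unfolding Dm_def dec_mono(2)[OF p0 gd] ..
  have R: "\<forall>q<p. Rfun p m (nrm p (\<lambda>i. ee p (k + l * i))) q = ee p (k + l * q)"
    by (rule theta_lin[OF p m]) (simp add: nrm_def)
  have "phi1 p m (Dm p k l) = Smat p (Rfun p m (nrm p (\<lambda>i. ee p (k + l * i))))"
    unfolding phi1_def Let_def phi_base_def db dx by simp
  also have "\<dots> = Dm p k l"
    unfolding Smat_mono Dm_def by (rule mono_cong) (simp_all add: R)
  finally show ?thesis .
qed

lemma phi_base_E1:
  assumes p: "prime p" "odd p" and m: "m \<ge> 1" and g: "good p m g"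
  shows "phi_base p m (Em p g k l 1) = Em p (Pfun p m (nrm p g)) k l 1"
proof -
  have p0: "p > 0" using p prime_gt_0_nat by blast
  have p1: "p > 1" using p prime_gt_1_nat by blast
  define h where "h i = ee p (k + l * i) * g (sh p 0 i)" for i
  have E: "Em p g k l 1 = monm p h (0 + 1)"
    unfolding Em_def Dm_def h_def using mono_mult[OF p0] by simp
  have gh: "good p m h" unfolding h_def by (rule good_mult[OF p0 good_D[OF p m] g])
  have db: "dec_b p m (Em p g k l 1) = 1" unfolding E dec_mono(1)[OF p0 gh] using p1 by simp
  have dx: "dec_xi p m (Em p g k l 1) = nrm p h" unfolding E dec_mono(2)[OF p0 gh] ..
  have r: "\<forall>q<p. nrm p g q ^ (p ^ m) = 1" using g by (simp add: good_def nrm_def)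
  have sh: "\<forall>q<p. nrm p h q = ee p (k + l * q) * nrm p g q" by (simp add: nrm_def h_def sh_0)
  have P: "\<forall>q<p. Pfun p m (nrm p h) q = ee p (k + l * q) * Pfun p m (nrm p g) q"
    by (rule theta_shift[OF p m r sh])
  have "phi_base p m (Em p g k l 1) = Smat p (Pfun p m (nrm p h)) * Xmat p"
    unfolding phi_base_def db dx by simp
  also have "\<dots> = monm p (\<lambda>i. Pfun p m (nrm p h) i * 1) (0 + 1)"
    unfolding Smat_mono Xmat_mono by (rule mono_mult[OF p0])
  also have "\<dots> = monm p (\<lambda>i. ee p (k + l * i) * Pfun p m (nrm p g) (sh p 0 i)) (0 + 1)"
    by (rule mono_cong) (simp_all add: P sh_0)
  also have "\<dots> = Em p (Pfun p m (nrm p g)) k l 1"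
    unfolding Em_def Dm_def using mono_mult[OF p0] by simp
  finally show ?thesis .
qed

lemma phi_Em:
  assumes p: "prime p" "odd p" and m: "m \<ge> 1" and g: "good p m g"
  shows "phi1 p m (Em p g k l j) = Em p (Pfun p m (nrm p g)) k l j"
proof -
  have p0: "p > 0" using p prime_gt_0_nat by blast
  define PA where "PA = Pfun p m (nrm p g)"
  have NP: "monm p g 1 ^\<^sub>m p = 1\<^sub>m p" using N_pow_p[OF p(1)] g by (simp add: good_def)
  have AP: "monm p PA 1 ^\<^sub>m p = 1\<^sub>m p" using N_pow_p[OF p(1) prod_Pfun[OF p]] by (simp add: PA_def)
  show ?thesis
  proof (cases "j mod p = 0")
    case True
    then have c: "[j = 0] (mod p)" by (simp add: cong_def)
    have "Em p g k l j = Em p g k l 0" by (rule Em_cong[OF p0 NP cong_refl cong_refl c])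
    also have "\<dots> = Dm p k l" by (simp add: Em_def)
    finally have e1: "Em p g k l j = Dm p k l" .
    have "Em p PA k l j = Em p PA k l 0" by (rule Em_cong[OF p0 AP cong_refl cong_refl c])
    also have "\<dots> = Dm p k l" by (simp add: Em_def)
    finally have e2: "Em p PA k l j = Dm p k l" .
    show ?thesis using phi_Dm[OF p m] e1 e2 by (simp add: PA_def)
  next
    case False
    define b where "b = j mod p"
    have b: "0 < b" "b < p" using False p0 by (auto simp: b_def)
    obtain h where h: "good p m h" "Em p g k l j = monm p h (int j)" using Em_mono[OF p m g] by blast
    have db: "dec_b p m (Em p g k l j) = b" unfolding h(2) dec_mono(1)[OF p0 h(1)] b_def
      by (metis nat_int zmod_int)
    obtain y where y: "y \<in> {1..p-1}" "[y * b = 1] (mod p)" using inv_exists[OF p(1) b] by blast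
    have jy: "[j * y = 1] (mod p)"
    proof -
      have "[j * y = b * y] (mod p)" by (intro cong_mult) (simp_all add: b_def cong_def)
      then show ?thesis using y(2) by (simp add: mult.commute cong_trans)
    qed
    define K where "K = y * k + (p - 1) * l * j * (\<Sum>s<y. s)"
    have "phi1 p m (Em p g k l j) = phi_base p m (Em p g k l j ^\<^sub>m y) ^\<^sub>m b"
      by (rule phi1_formula[OF p(1) db _ b(2) y]) (use b in simp)
    also have "Em p g k l j ^\<^sub>m y = Em p g K (l * y) (j * y)"
      unfolding K_def by (rule Em_pow[OF p0 refl])
    also have "\<dots> = Em p g K (l * y) 1" by (rule Em_cong[OF p0 NP cong_refl cong_refl jy])
    also have "phi_base p m \<dots> = Em p PA K (l * y) 1" unfolding PA_def by (rule phi_base_E1[OF p m g])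
    also have "\<dots> = Em p PA K (l * y) (j * y)" by (rule Em_cong[OF p0 AP cong_refl cong_refl cong_sym[OF jy]])
    also have "\<dots> = Em p PA k l j ^\<^sub>m y" unfolding K_def by (rule Em_pow[OF p0 refl, symmetric])
    also have "(Em p PA k l j ^\<^sub>m y) ^\<^sub>m b = Em p PA k l j ^\<^sub>m (y * b)"
      by (rule pow_mult_mat[OF Em_carrier, symmetric])
    also have "\<dots> = Em p PA k l j ^\<^sub>m ((y * b) mod p)"
      by (rule pow_mod_mat[OF Em_carrier Em_pow_p[OF p AP]])
    also have "(y * b) mod p = 1"
    proof -
      have "p > 1" using p prime_gt_1_nat by blast
      then show ?thesis using y(2) by (simp add: cong_def)
    qed
    finally show ?thesis by (simp add: PA_def)
  qed
qed

lemma minv_eq: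
  assumes A: "A \<in> carrier_mat n n" and B: "B \<in> carrier_mat n n"
    and AB: "A * B = 1\<^sub>m n" and BA: "B * A = 1\<^sub>m n"
  shows "minv A = B"
  unfolding minv_def
proof (rule the_equality)
  show "inverts_mat A B \<and> inverts_mat B A" using A B AB BA by (simp add: inverts_mat_def)
next
  fix B' assume h: "inverts_mat A B' \<and> inverts_mat B' A"
  then have AB': "A * B' = 1\<^sub>m n" and B'A: "B' * A = 1\<^sub>m (dim_row B')" using A by (auto simp: inverts_mat_def)
  have c1: "dim_col B' = n" using arg_cong[OF AB', of dim_col] by simp
  have c2: "dim_row B' = n" using arg_cong[OF B'A, of dim_col] A by simp
  have B'c: "B' \<in> carrier_mat n n" using c1 c2 by auto
  have "B' = B' * (A * B)" using AB B'c by simp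
  also have "\<dots> = (B' * A) * B" using A B B'c by (simp add: assoc_mult_mat[of _ n n _ n _ n])
  also have "\<dots> = B" using B'A c2 B by simp
  finally show "B' = B" .
qed

lemma sh_step:
  assumes p: "p > 0"
  shows "sh p (int b) ((Suc t * b) mod p) = (t * b) mod p"
proof -
  have "int (sh p (int b) ((Suc t * b) mod p)) = (int ((Suc t * b) mod p) - int b) mod int p"
    by (rule int_sh[OF p])
  also have "\<dots> = (int (Suc t * b) - int b) mod int p"
    by (simp add: zmod_int mod_diff_left_eq)
  also have "\<dots> = int ((t * b) mod p)" by (simp add: zmod_int algebra_simps)
  finally show ?thesis by simp
qed

theorem lemma7:
  fixes p m c :: nat and M M' :: "complex mat"
  assumes "prime p" and "odd p" and "m \<ge> 1"
    and "M \<in> Kset p m" and "M' \<in> Kset p m"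
    and "dec_b p m M \<noteq> 0" and "dec_b p m M' \<noteq> 0"
    and "c < p"
    and "commutator M M' = omega p ^ c \<cdot>\<^sub>m 1\<^sub>m p"
  shows "phi1 p m (M * M') = phi1 p m M * phi1 p m M'"
proof -
  note p = assms(1,2)
  note m = assms(3)
  have p0: "p > 0" using p prime_gt_0_nat by blast
  have p1: "p > 1" using p prime_gt_1_nat by blast
  obtain f b0 where f: "good p m f" and M0: "M = monm p f b0" using assms(4) Kset_iff[OF p0] by blast
  obtain f' b0' where f': "good p m f'" and M0': "M' = monm p f' b0'" using assms(5) Kset_iff[OF p0] by blast
  define b where "b = dec_b p m M"
  define b2 where "b2 = dec_b p m M'"
  have bdef: "b = nat (b0 mod int p)" unfolding b_def M0 dec_mono(1)[OF p0 f] ..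
  have b2def: "b2 = nat (b0' mod int p)" unfolding b2_def M0' dec_mono(1)[OF p0 f'] ..
  have b: "0 < b" "b < p" using assms(6) p0 bdef by (auto simp: b_def nat_less_iff)
  have b2: "0 < b2" "b2 < p" using assms(7) p0 b2def by (auto simp: b2_def nat_less_iff)
  have M: "M = monm p f (int b)" unfolding M0 bdef using p0 by (intro mono_cong) simp_all
  have M': "M' = monm p f' (int b2)" unfolding M0' b2def using p0 by (intro mono_cong) simp_all
  have fnz: "\<And>i. i < p \<Longrightarrow> f i \<noteq> 0" using good_nz[OF p0 f] .
  have f'nz: "\<And>i. i < p \<Longrightarrow> f' i \<noteq> 0" using good_nz[OF p0 f'] .
  have Mc: "M \<in> carrier_mat p p" "M' \<in> carrier_mat p p" using M M' by simp_all
  have ndb: "\<not> int p dvd int b" using b by (auto dest: zdvd_imp_le)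
  have ndb2: "\<not> int p dvd int b2" using b2 by (auto dest: zdvd_imp_le)
  have Mp: "M ^\<^sub>m p = 1\<^sub>m p" unfolding M by (rule mono_pow_p[OF p(1) ndb]) (use f in \<open>simp add: good_def\<close>)
  have M'p: "M' ^\<^sub>m p = 1\<^sub>m p" unfolding M' by (rule mono_pow_p[OF p(1) ndb2]) (use f' in \<open>simp add: good_def\<close>)
  obtain y where y: "y \<in> {1..p-1}" "[y * b = 1] (mod p)" using inv_exists[OF p(1) b] by blast
  obtain g1 where g1: "good p m g1" "M ^\<^sub>m y = monm p g1 (int y * int b)"
    using K_pow[OF p0 f] M by blast
  have yb: "(int y * int b) mod int p = 1 mod int p"
    using y(2) unfolding cong_def by (metis of_nat_mult zmod_int of_nat_1)
  define N where "N = monm p g1 1"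
  have MyN: "M ^\<^sub>m y = N" unfolding g1(2) N_def by (rule mono_cong) (simp_all add: yb)
  have Nc: "N \<in> carrier_mat p p" by (simp add: N_def)
  have NP: "N ^\<^sub>m p = 1\<^sub>m p" unfolding N_def using N_pow_p[OF p(1)] g1(1) by (simp add: good_def)
  have MN: "M = N ^\<^sub>m b"
  proof -
    have "N ^\<^sub>m b = M ^\<^sub>m (y * b)" unfolding MyN[symmetric] by (rule pow_mult_mat[OF Mc(1), symmetric])
    also have "\<dots> = M ^\<^sub>m ((y * b) mod p)" by (rule pow_mod_mat[OF Mc(1) Mp])
    also have "(y * b) mod p = 1" using y(2) p1 by (simp add: cong_def)
    finally show ?thesis using Mc(1) by simp
  qed
  have ME: "M = Em p g1 0 0 b" unfolding Em_def Dm_00[OF p0] MN N_def[symmetric] using Nc by simp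
  have inv: "minv X = X ^\<^sub>m (p - 1)" if X: "X \<in> carrier_mat p p" "X ^\<^sub>m p = 1\<^sub>m p" for X
  proof (rule minv_eq[OF X(1)])
    show "X ^\<^sub>m (p - 1) \<in> carrier_mat p p" using X by simp
    have "X * X ^\<^sub>m (p - 1) = X ^\<^sub>m (1 + (p - 1))" using pow_add_mat[OF X(1), of 1 "p - 1"] X by simp
    then show "X * X ^\<^sub>m (p - 1) = 1\<^sub>m p" using X p0 by simp
    have "X ^\<^sub>m (p - 1) * X = X ^\<^sub>m (Suc (p - 1))" by simp
    then show "X ^\<^sub>m (p - 1) * X = 1\<^sub>m p" using X p0 by simp
  qed
  define Mi where "Mi = M ^\<^sub>m (p - 1)"
  define M'i where "M'i = M' ^\<^sub>m (p - 1)"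
  have Mic: "Mi \<in> carrier_mat p p" "M'i \<in> carrier_mat p p" using Mc by (simp_all add: Mi_def M'i_def)
  have MiM: "Mi * M = 1\<^sub>m p" unfolding Mi_def using Mp p0 by (simp flip: pow_mat.simps(2))
  have M'iM': "M'i * M' = 1\<^sub>m p" unfolding M'i_def using M'p p0 by (simp flip: pow_mat.simps(2))
  define S where "S = omega p ^ c \<cdot>\<^sub>m 1\<^sub>m p"
  have Sc: "S \<in> carrier_mat p p" by (simp add: S_def)
  have comm: "M * M' * Mi * M'i = S"
    using assms(9) unfolding commutator_def S_def inv[OF Mc(1) Mp] inv[OF Mc(2) M'p] Mi_def M'i_def .
  have rel: "M * M' = S * (M' * M)"
  proof -
    have "S * (M' * M) = M * M' * Mi * (M'i * (M' * M))"
      unfolding comm[symmetric] using Mc Mic by (simp add: assoc_sq[of _ p])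
    also have "M'i * (M' * M) = M" using M'iM' Mc Mic by (simp add: assoc_sq[of _ p, symmetric])
    also have "M * M' * Mi * M = M * M'" using MiM Mc Mic by (simp add: assoc_sq[of _ p])
    finally show ?thesis by simp
  qed
  obtain g2 where g2: "good p m g2" "N ^\<^sub>m b2 = monm p g2 (int b2 * 1)"
    using K_pow[OF p0 g1(1)] unfolding N_def by blast
  have g2nz: "\<And>i. i < p \<Longrightarrow> g2 i \<noteq> 0" using good_nz[OF p0 g2(1)] .
  define \<zeta> where "\<zeta> i = f' i / g2 i" for i
  have znz: "\<And>i. i < p \<Longrightarrow> \<zeta> i \<noteq> 0" using f'nz g2nz by (simp add: \<zeta>_def)
  define Z where "Z = monm p \<zeta> 0"
  have Zc: "Z \<in> carrier_mat p p" by (simp add: Z_def)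
  have M'Z: "M' = Z * N ^\<^sub>m b2"
  proof -
    have "Z * N ^\<^sub>m b2 = monm p (\<lambda>i. \<zeta> i * g2 (sh p 0 i)) (0 + int b2 * 1)"
      unfolding Z_def g2(2) by (rule mono_mult[OF p0])
    also have "\<dots> = M'" unfolding M' by (rule mono_cong) (simp_all add: \<zeta>_def sh_0 g2nz)
    finally show ?thesis by simp
  qed
  have NbNb2: "N ^\<^sub>m b2 * M = M * N ^\<^sub>m b2"
    unfolding MN using pow_add_mat[OF Nc, of b2 b] pow_add_mat[OF Nc, of b b2] by (simp add: add.commute)
  have NbInv: "N ^\<^sub>m b2 * N ^\<^sub>m ((p - 1) * b2) = 1\<^sub>m p"
  proof -
    have "N ^\<^sub>m b2 * N ^\<^sub>m ((p - 1) * b2) = N ^\<^sub>m (b2 + (p - 1) * b2)" by (rule pow_add_mat[OF Nc, symmetric])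
    also have "b2 + (p - 1) * b2 = p * b2" using p0 by (cases p) auto
    also have "N ^\<^sub>m (p * b2) = 1\<^sub>m p" using pow_mult_mat[OF Nc, of p b2] NP by (simp add: pow_one_mat)
    finally show ?thesis .
  qed
  have MZ: "M * Z = S * Z * M"
  proof -
    have "(M * Z) * N ^\<^sub>m b2 = M * M'" unfolding M'Z using Nc Mc Zc by (simp add: assoc_sq[of _ p])
    also have "\<dots> = S * (M' * M)" by (rule rel)
    also have "\<dots> = (S * Z * M) * N ^\<^sub>m b2"
      unfolding M'Z using Nc Mc Zc Sc NbNb2 by (simp add: assoc_sq[of _ p])
    finally have e: "(M * Z) * N ^\<^sub>m b2 = (S * Z * M) * N ^\<^sub>m b2" .
    have "M * Z = (M * Z) * (N ^\<^sub>m b2 * N ^\<^sub>m ((p - 1) * b2))" using NbInv Mc Zc by simp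
    also have "\<dots> = ((M * Z) * N ^\<^sub>m b2) * N ^\<^sub>m ((p - 1) * b2)" using Nc Mc Zc by (simp add: assoc_sq[of _ p])
    also have "\<dots> = ((S * Z * M) * N ^\<^sub>m b2) * N ^\<^sub>m ((p - 1) * b2)" by (simp only: e)
    also have "\<dots> = (S * Z * M) * (N ^\<^sub>m b2 * N ^\<^sub>m ((p - 1) * b2))" using Nc Mc Zc Sc by (simp add: assoc_sq[of _ p])
    also have "\<dots> = S * Z * M" using NbInv Mc Zc Sc by simp
    finally show ?thesis .
  qed
  have zrec: "\<zeta> (sh p (int b) i) = ee p c * \<zeta> i" if i: "i < p" for i
  proof -
    have L: "M * Z = monm p (\<lambda>i. f i * \<zeta> (sh p (int b) i)) (int b + 0)"
      unfolding M Z_def by (rule mono_mult[OF p0])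
    have "S * Z * M = monm p (\<lambda>i. omega p ^ c * \<zeta> (sh p 0 i)) (0 + 0) * M"
      unfolding S_def smult_one_mono Z_def using mono_mult[OF p0] by simp
    also have "\<dots> = monm p (\<lambda>i. omega p ^ c * \<zeta> (sh p 0 i) * f (sh p (0 + 0) i)) (0 + 0 + int b)"
      unfolding M by (rule mono_mult[OF p0])
    finally have R: "S * Z * M = \<dots>" .
    have nz: "\<And>i. i < p \<Longrightarrow> f i * \<zeta> (sh p (int b) i) \<noteq> 0" using fnz znz sh_lt[OF p0] by simp
    have EQ: "monm p (\<lambda>i. f i * \<zeta> (sh p (int b) i)) (int b + 0) =
       monm p (\<lambda>i. omega p ^ c * \<zeta> (sh p 0 i) * f (sh p (0 + 0) i)) (0 + 0 + int b)"
      using MZ unfolding L R .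
    have "\<forall>i<p. omega p ^ c * \<zeta> (sh p 0 i) * f (sh p (0 + 0) i) = f i * \<zeta> (sh p (int b) i)"
      using mono_eq_D[OF p0 nz EQ] by blast
    then have "omega p ^ c * \<zeta> i * f i = f i * \<zeta> (sh p (int b) i)" using i by (simp add: sh_0)
    then show ?thesis using fnz[OF i] by (simp add: omega_pow)
  qed
  have zt: "\<zeta> ((t * b) mod p) = ee p ((p - 1) * c * t) * \<zeta> 0" for t
  proof (induction t)
    case 0 then show ?case by (simp add: ee_0)
  next
    case (Suc t)
    have "\<zeta> ((t * b) mod p) = ee p c * \<zeta> ((Suc t * b) mod p)"
      using zrec[of "(Suc t * b) mod p"] sh_step[OF p0, of b t] p0 by simp
    then have "ee p ((p - 1) * c) * \<zeta> ((t * b) mod p) = ee p ((p - 1) * c) * ee p c * \<zeta> ((Suc t * b) mod p)"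
      by simp
    also have "ee p ((p - 1) * c) * ee p c = 1"
    proof -
      have "ee p ((p - 1) * c) * ee p c = ee p ((p - 1) * c + c)" by (simp add: ee_add)
      also have "(p - 1) * c + c = p * c" using p0 by (cases p) auto
      finally show ?thesis using ee_N[OF p0] by (simp add: ee_mult)
    qed
    finally have "\<zeta> ((Suc t * b) mod p) = ee p ((p - 1) * c) * \<zeta> ((t * b) mod p)" by simp
    also have "\<dots> = ee p ((p - 1) * c) * ee p ((p - 1) * c * t) * \<zeta> 0" using Suc by simp
    also have "ee p ((p - 1) * c) * ee p ((p - 1) * c * t) = ee p ((p - 1) * c * Suc t)"
    proof -
      have "ee p ((p - 1) * c) * ee p ((p - 1) * c * t) = ee p ((p - 1) * c + (p - 1) * c * t)"
        by (rule ee_add[symmetric])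
      also have "(p - 1) * c + (p - 1) * c * t = (p - 1) * c * Suc t" by (rule mult_Suc_right[symmetric])
      finally show ?thesis .
    qed
    finally show ?case .
  qed
  define l where "l = (p - 1) * c * y"
  have zl: "\<zeta> i = ee p (l * i) * \<zeta> 0" if i: "i < p" for i
  proof -
    have "(i * y * b) mod p = i"
    proof -
      have "[i * (y * b) = i * 1] (mod p)" using y(2) by (intro cong_mult) auto
      then show ?thesis using i by (simp add: cong_def mult.assoc)
    qed
    then have "\<zeta> i = ee p ((p - 1) * c * (i * y)) * \<zeta> 0" using zt[of "i * y"] by simp
    then show ?thesis by (simp add: l_def algebra_simps)
  qed
  have z0p: "\<zeta> 0 ^ p = 1"
  proof -
    have "(\<Prod>i<p. \<zeta> i) = (\<Prod>i<p. f' i) / (\<Prod>i<p. g2 i)" by (simp add: \<zeta>_def prod_dividef)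
    also have "\<dots> = 1" using f' g2(1) by (simp add: good_def)
    finally have a: "(\<Prod>i<p. \<zeta> i) = 1" .
    have "(\<Prod>i<p. \<zeta> i) = (\<Prod>i<p. ee p (0 + l * i) * \<zeta> 0)"
    proof (rule prod.cong)
      fix x assume "x \<in> {..<p}"
      then have "x < p" by simp
      then have "\<zeta> x = ee p (l * x) * \<zeta> 0" by (rule zl)
      then show "\<zeta> x = ee p (0 + l * x) * \<zeta> 0" by simp
    qed simp
    also have "\<dots> = (\<Prod>i<p. ee p (0 + l * i)) * \<zeta> 0 ^ p" by (simp add: prod.distrib)
    also have "(\<Prod>i<p. ee p (0 + l * i)) = 1" by (rule prod_lin[OF p])
    finally show ?thesis using a by simp
  qed
  obtain k0 where k0: "\<zeta> 0 = ee p k0" using ee_root[OF p0 z0p] by blast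
  have zk: "\<zeta> i = ee p (k0 + l * i)" if i: "i < p" for i
  proof -
    have "\<zeta> i = ee p (l * i) * ee p k0" using zl[OF i] k0 by simp
    also have "\<dots> = ee p (k0 + l * i)" by (simp add: ee_add mult.commute)
    finally show ?thesis .
  qed
  have ZD: "Z = Dm p k0 l"
    unfolding Z_def Dm_def by (rule mono_cong) (simp_all add: zk)
  have M'E: "M' = Em p g1 k0 l b2" unfolding M'Z ZD Em_def N_def ..
  have MM'E: "M * M' = Em p g1 (0 + k0 + (p - 1) * l * b) (0 + l) (b + b2)"
    unfolding ME M'E by (rule Em_mult[OF p0])
  define PA where "PA = Pfun p m (nrm p g1)"
  have "phi1 p m (M * M') = Em p PA (0 + k0 + (p - 1) * l * b) (0 + l) (b + b2)"
    unfolding MM'E PA_def by (rule phi_Em[OF p m g1(1)])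
  also have "\<dots> = Em p PA 0 0 b * Em p PA k0 l b2" by (rule Em_mult[OF p0, symmetric])
  also have "\<dots> = phi1 p m M * phi1 p m M'"
    unfolding ME M'E PA_def phi_Em[OF p m g1(1)] ..
  finally show ?thesis .
qed

end
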